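(* Let $\mathcal B\subseteq\mathbf B(\mathcal H)$ be a $C^*$-algebra, $\mathcal A=\overline{\mathcal B}^{\mathrm{wot}}$ its weak-operator closure, and $A\in\mathcal B$. Then $\mathrm d(M_{A,A})\le\mathrm d(M^{\mathcal B}_{A,A})$ (termwise), where $M_{A,A}:\mathcal A\to\mathcal A$ and $M^{\mathcal B}_{A,A}:\mathcal B\to\mathcal B$ are both given by $X\mapsto AXA$.
   Context: Kolmogorov numbers of a bounded $T:\mathcal X\to\mathcal Y$: $\mathrm d_n(T)=\inf_V\sup_{\|x\|\le1}\inf_{y\in V}\|Tx-y\|$, the infimum over subspaces $V\subseteq\mathcal Y$ with $\dim V<n$; $\mathrm d(T)=(\mathrm d_n(T))_n$. *)

theory Defs
  imports "HOL-Analysis.Analysis"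
begin

text \<open>A complex Hilbert space is modelled as a real Hilbert space H (its realification,
  with real inner product = real part of the complex inner product) together with a
  complex structure J (multiplication by i), which is an orthogonal operator with J o J = -id.\<close>

definition complex_structure :: "('h::{real_inner,complete_space} \<Rightarrow>\<^sub>L 'h) \<Rightarrow> bool" where
  "complex_structure J \<longleftrightarrow> (\<forall>x. blinfun_apply J (blinfun_apply J x) = - x) \<and>
     (\<forall>x y. inner (blinfun_apply J x) (blinfun_apply J y) = inner x y)"

text \<open>B(H): bounded complex-linear operators, i.e. bounded real-linear ones commuting with J.\<close>
definition cops :: "('h::{real_inner,complete_space} \<Rightarrow>\<^sub>L 'h) \<Rightarrow> ('h \<Rightarrow>\<^sub>L 'h) set" where
  "cops J = {T. \<forall>x. blinfun_apply T (blinfun_apply J x) = blinfun_apply J (blinfun_apply T x)}"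

definition cscale :: "('h::{real_inner,complete_space} \<Rightarrow>\<^sub>L 'h) \<Rightarrow> complex \<Rightarrow> ('h \<Rightarrow>\<^sub>L 'h) \<Rightarrow> ('h \<Rightarrow>\<^sub>L 'h)" where
  "cscale J c T = Re c *\<^sub>R T + Im c *\<^sub>R (J o\<^sub>L T)"

text \<open>S is the Hilbert-space adjoint of T (the real adjoint of the realification
  coincides with the complex adjoint).\<close>
definition is_adjoint :: "('h::real_inner \<Rightarrow>\<^sub>L 'h) \<Rightarrow> ('h \<Rightarrow>\<^sub>L 'h) \<Rightarrow> bool" where
  "is_adjoint T S \<longleftrightarrow> (\<forall>x y. inner (blinfun_apply T x) y = inner x (blinfun_apply S y))"

definition cstar_algebra :: "('h::{real_inner,complete_space} \<Rightarrow>\<^sub>L 'h) \<Rightarrow> ('h \<Rightarrow>\<^sub>L 'h) set \<Rightarrow> bool" where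
  "cstar_algebra J B \<longleftrightarrow>
     B \<subseteq> cops J \<and> 0 \<in> B \<and>
     (\<forall>S\<in>B. \<forall>T\<in>B. S + T \<in> B) \<and>
     (\<forall>c. \<forall>T\<in>B. cscale J c T \<in> B) \<and>
     (\<forall>S\<in>B. \<forall>T\<in>B. S o\<^sub>L T \<in> B) \<and>
     (\<forall>T\<in>B. \<exists>S\<in>B. is_adjoint T S) \<and>
     closed B"

text \<open>Closure in B(H) with respect to the weak operator topology: T is in the closure iff
  every basic WOT-neighbourhood of T meets B. (Convergence of the complex inner products
  is equivalent to convergence of all real inner products inner (T x) y.)\<close>
definition wot_closure :: "('h::{real_inner,complete_space} \<Rightarrow>\<^sub>L 'h) \<Rightarrow> ('h \<Rightarrow>\<^sub>L 'h) set \<Rightarrow> ('h \<Rightarrow>\<^sub>L 'h) set" where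
  "wot_closure J B = {T \<in> cops J. \<forall>F. finite F \<longrightarrow> (\<forall>e>0. \<exists>S\<in>B.
       \<forall>(x,y)\<in>F. \<bar>inner (blinfun_apply (T - S) x) y\<bar> < e)}"

definition cspan :: "('h::{real_inner,complete_space} \<Rightarrow>\<^sub>L 'h) \<Rightarrow> ('h \<Rightarrow>\<^sub>L 'h) set \<Rightarrow> ('h \<Rightarrow>\<^sub>L 'h) set" where
  "cspan J S = {(\<Sum>s\<in>S. cscale J (c s) s) | c. True}"

text \<open>Kolmogorov number d_n of M : X \<rightarrow> Y (X, Y complex subspaces of B(H) with the operator
  norm): the infimum over complex subspaces V of Y of complex dimension < n (i.e. spanned by
  fewer than n elements of Y) of the sup over the unit ball of X of dist(M x, V).\<close>
definition kolmogorov ::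
  "('h::{real_inner,complete_space} \<Rightarrow>\<^sub>L 'h) \<Rightarrow> ('h \<Rightarrow>\<^sub>L 'h) set \<Rightarrow> ('h \<Rightarrow>\<^sub>L 'h) set
     \<Rightarrow> (('h \<Rightarrow>\<^sub>L 'h) \<Rightarrow> ('h \<Rightarrow>\<^sub>L 'h)) \<Rightarrow> nat \<Rightarrow> real" where
  "kolmogorov J X Y M n =
     Inf {Sup ((\<lambda>x. infdist (M x) V) ` {x \<in> X. norm x \<le> 1}) | V.
            \<exists>S. finite S \<and> card S < n \<and> S \<subseteq> Y \<and> V = cspan J S}"

end

theory Submission
  imports Defs
begin



lemma adj_unique: "is_adjoint T S1 \<Longrightarrow> is_adjoint T S2 \<Longrightarrow> S1 = S2"
proof (rule blinfun_eqI)
  fix y assume a: "is_adjoint T S1" "is_adjoint T S2"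
  have "inner (blinfun_apply S1 y - blinfun_apply S2 y) (blinfun_apply S1 y - blinfun_apply S2 y) = 0"
    using a unfolding is_adjoint_def by (simp add: inner_diff_right)
  then show "blinfun_apply S1 y = blinfun_apply S2 y" by simp
qed

lemma adj_sym: "is_adjoint T S \<Longrightarrow> is_adjoint S T"
  unfolding is_adjoint_def by (metis inner_commute)

lemma adj_add: "is_adjoint T S \<Longrightarrow> is_adjoint T' S' \<Longrightarrow> is_adjoint (T + T') (S + S')"
  unfolding is_adjoint_def by (simp add: plus_blinfun.rep_eq inner_add_left inner_add_right)

lemma adj_diff: "is_adjoint T S \<Longrightarrow> is_adjoint T' S' \<Longrightarrow> is_adjoint (T - T') (S - S')"
  unfolding is_adjoint_def by (simp add: minus_blinfun.rep_eq inner_diff_left inner_diff_right)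

lemma adj_scale: "is_adjoint T S \<Longrightarrow> is_adjoint (r *\<^sub>R T) (r *\<^sub>R S)"
  unfolding is_adjoint_def by (simp add: scaleR_blinfun.rep_eq)

lemma adj_comp: "is_adjoint T S \<Longrightarrow> is_adjoint T' S' \<Longrightarrow> is_adjoint (T o\<^sub>L T') (S' o\<^sub>L S)"
  unfolding is_adjoint_def by simp

lemma adj_zero: "is_adjoint 0 0"
  unfolding is_adjoint_def by simp

lemma adj_id: "is_adjoint id_blinfun id_blinfun"
  unfolding is_adjoint_def by simp

lemma adj_norm:
  fixes T :: "'h::{real_inner,complete_space} \<Rightarrow>\<^sub>L 'h"
  assumes "is_adjoint T S" shows "norm S \<le> norm T"
proof (rule norm_blinfun_bound)
  show "0 \<le> norm T" by simp
  fix y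
  have "(norm (blinfun_apply S y))^2 = inner (blinfun_apply T (blinfun_apply S y)) y"
    using assms unfolding is_adjoint_def by (simp add: power2_norm_eq_inner)
  also have "\<dots> \<le> norm (blinfun_apply T (blinfun_apply S y)) * norm y"
    by (rule norm_cauchy_schwarz)
  also have "\<dots> \<le> norm T * norm (blinfun_apply S y) * norm y"
    by (simp add: mult_right_mono norm_blinfun)
  finally have h: "(norm (blinfun_apply S y))^2 \<le> norm T * norm y * norm (blinfun_apply S y)"
    by (simp add: algebra_simps)
  show "norm (blinfun_apply S y) \<le> norm T * norm y"
  proof (cases "norm (blinfun_apply S y) = 0")
    case True then show ?thesis by simp
  next
    case False
    then have "norm (blinfun_apply S y) > 0" by simp
    with h show ?thesis by (simp add: power2_eq_square mult_le_cancel_right)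
  qed
qed

lemma adj_lim:
  fixes Z :: "nat \<Rightarrow> ('h::{real_inner,complete_space} \<Rightarrow>\<^sub>L 'h)"
  assumes "\<And>n. is_adjoint (Z n) (W n)" "Z \<longlonglongrightarrow> Z0" "W \<longlonglongrightarrow> W0"
  shows "is_adjoint Z0 W0"
  unfolding is_adjoint_def
proof (intro allI)
  fix x y
  have "(\<lambda>n. inner (blinfun_apply (Z n) x) y) \<longlonglongrightarrow> inner (blinfun_apply Z0 x) y"
    by (intro tendsto_intros assms)
  moreover have "(\<lambda>n. inner x (blinfun_apply (W n) y)) \<longlonglongrightarrow> inner x (blinfun_apply W0 y)"
    by (intro tendsto_intros assms)
  moreover have "(\<lambda>n. inner (blinfun_apply (Z n) x) y) = (\<lambda>n. inner x (blinfun_apply (W n) y))"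
    using assms(1) unfolding is_adjoint_def by auto
  ultimately show "inner (blinfun_apply Z0 x) y = inner x (blinfun_apply W0 y)"
    using LIMSEQ_unique by metis
qed




definition rstar :: "('h::{real_inner,complete_space} \<Rightarrow>\<^sub>L 'h) set \<Rightarrow> bool" where
  "rstar B \<longleftrightarrow> 0 \<in> B \<and> (\<forall>S\<in>B. \<forall>T\<in>B. S + T \<in> B) \<and> (\<forall>r. \<forall>T\<in>B. r *\<^sub>R T \<in> B) \<and>
     (\<forall>S\<in>B. \<forall>T\<in>B. S o\<^sub>L T \<in> B) \<and> (\<forall>T\<in>B. \<exists>S\<in>B. is_adjoint T S) \<and> closed B"

definition wcl :: "('h::{real_inner,complete_space} \<Rightarrow>\<^sub>L 'h) set \<Rightarrow> ('h \<Rightarrow>\<^sub>L 'h) set" where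
  "wcl B = {T. \<forall>F. finite F \<longrightarrow> (\<forall>e>0. \<exists>S\<in>B.
       \<forall>(x,y)\<in>F. \<bar>inner (blinfun_apply (T - S) x) y\<bar> < e)}"

lemma cstar_rstar: assumes "cstar_algebra J B" shows "rstar B"
proof -
  have "\<And>r T. T \<in> B \<Longrightarrow> r *\<^sub>R T \<in> B"
  proof -
    fix r :: real and T assume "T \<in> B"
    then have "cscale J (complex_of_real r) T \<in> B" using assms unfolding cstar_algebra_def by blast
    then show "r *\<^sub>R T \<in> B" unfolding cscale_def by simp
  qed
  then show ?thesis using assms unfolding cstar_algebra_def rstar_def by blast
qed

lemma wot_sub_wcl: "wot_closure J B \<subseteq> wcl B"
  unfolding wot_closure_def wcl_def by blast

lemma wclD: "T \<in> wcl B \<Longrightarrow> finite F \<Longrightarrow> e > 0 \<Longrightarrow> \<exists>S\<in>B. \<forall>(x,y)\<in>F. \<bar>inner (blinfun_apply (T - S) x) y\<bar> < e"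
  unfolding wcl_def by blast

lemma wclI: "(\<And>F e. finite F \<Longrightarrow> e > 0 \<Longrightarrow> \<exists>S\<in>B. \<forall>(x,y)\<in>F. \<bar>inner (blinfun_apply (T - S) x) y\<bar> < e) \<Longrightarrow> T \<in> wcl B"
  unfolding wcl_def by blast

lemma B_sub_wcl: "T \<in> B \<Longrightarrow> T \<in> wcl B"
  by (rule wclI) (auto intro!: bexI[of _ T])

lemma wcl_add:
  assumes B: "rstar B" and T1: "T1 \<in> wcl B" and T2: "T2 \<in> wcl B"
  shows "T1 + T2 \<in> wcl B"
proof (rule wclI)
  fix F :: "('a \<times> 'a) set" and e :: real assume F: "finite F" and e: "e > 0"
  obtain S1 where S1: "S1 \<in> B" "\<forall>(x,y)\<in>F. \<bar>inner (blinfun_apply (T1 - S1) x) y\<bar> < e/2"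
    using wclD[OF T1 F, of "e/2"] e by auto
  obtain S2 where S2: "S2 \<in> B" "\<forall>(x,y)\<in>F. \<bar>inner (blinfun_apply (T2 - S2) x) y\<bar> < e/2"
    using wclD[OF T2 F, of "e/2"] e by auto
  have "S1 + S2 \<in> B" using B S1 S2 unfolding rstar_def by blast
  moreover have "\<forall>(x,y)\<in>F. \<bar>inner (blinfun_apply (T1 + T2 - (S1 + S2)) x) y\<bar> < e"
  proof (clarify)
    fix x y assume xy: "(x,y) \<in> F"
    have "inner (blinfun_apply (T1 + T2 - (S1 + S2)) x) y =
        inner (blinfun_apply (T1 - S1) x) y + inner (blinfun_apply (T2 - S2) x) y"
      by (simp add: blinfun.diff_left blinfun.add_left inner_add_left inner_diff_left)
    then show "\<bar>inner (blinfun_apply (T1 + T2 - (S1 + S2)) x) y\<bar> < e"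
      using S1(2) S2(2) xy by fastforce
  qed
  ultimately show "\<exists>S\<in>B. \<forall>(x,y)\<in>F. \<bar>inner (blinfun_apply (T1 + T2 - S) x) y\<bar> < e" by blast
qed

lemma wcl_scale:
  assumes B: "rstar B" and T: "T \<in> wcl B"
  shows "r *\<^sub>R T \<in> wcl B"
proof (rule wclI)
  fix F :: "('a \<times> 'a) set" and e :: real assume F: "finite F" and e: "e > 0"
  obtain S where S: "S \<in> B" "\<forall>(x,y)\<in>F. \<bar>inner (blinfun_apply (T - S) x) y\<bar> < e/(\<bar>r\<bar>+1)"
    using wclD[OF T F, of "e/(\<bar>r\<bar>+1)"] e by auto
  have "r *\<^sub>R S \<in> B" using B S unfolding rstar_def by blast
  moreover have "\<forall>(x,y)\<in>F. \<bar>inner (blinfun_apply (r *\<^sub>R T - r *\<^sub>R S) x) y\<bar> < e"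
  proof (clarify)
    fix x y assume xy: "(x,y) \<in> F"
    have eq: "inner (blinfun_apply (r *\<^sub>R T - r *\<^sub>R S) x) y = r * inner (blinfun_apply (T - S) x) y"
      by (simp add: minus_blinfun.rep_eq scaleR_blinfun.rep_eq inner_diff_left algebra_simps)
    have "\<bar>r\<bar> * \<bar>inner (blinfun_apply (T - S) x) y\<bar> \<le> (\<bar>r\<bar>+1) * \<bar>inner (blinfun_apply (T - S) x) y\<bar>"
      by (simp add: mult_right_mono)
    also have "\<dots> < (\<bar>r\<bar>+1) * (e/(\<bar>r\<bar>+1))"
      using S(2) xy by (intro mult_strict_left_mono) auto
    also have "\<dots> = e" by simp
    finally show "\<bar>inner (blinfun_apply (r *\<^sub>R T - r *\<^sub>R S) x) y\<bar> < e"
      by (simp add: eq abs_mult)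
  qed
  ultimately show "\<exists>S\<in>B. \<forall>(x,y)\<in>F. \<bar>inner (blinfun_apply (r *\<^sub>R T - S) x) y\<bar> < e" by blast
qed

lemma wcl_adj:
  assumes B: "rstar B" and T: "T \<in> wcl B" and adj: "is_adjoint T Ts"
  shows "Ts \<in> wcl B"
proof (rule wclI)
  fix F :: "('a \<times> 'a) set" and e :: real assume F: "finite F" and e: "e > 0"
  obtain S where S: "S \<in> B" "\<forall>(x,y)\<in>(\<lambda>(x,y). (y,x)) ` F. \<bar>inner (blinfun_apply (T - S) x) y\<bar> < e"
    using wclD[OF T _ e, of "(\<lambda>(x,y). (y,x)) ` F"] F by auto
  obtain Ss where Ss: "Ss \<in> B" "is_adjoint S Ss" using B S(1) unfolding rstar_def by blast
  have a2: "is_adjoint (T - S) (Ts - Ss)" by (rule adj_diff[OF adj Ss(2)])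
  have "\<forall>(x,y)\<in>F. \<bar>inner (blinfun_apply (Ts - Ss) x) y\<bar> < e"
  proof (clarify)
    fix x y assume xy: "(x,y) \<in> F"
    have "inner (blinfun_apply (Ts - Ss) x) y = inner (blinfun_apply (T - S) y) x"
      using a2 unfolding is_adjoint_def by (metis inner_commute)
    then show "\<bar>inner (blinfun_apply (Ts - Ss) x) y\<bar> < e" using S(2) xy by force
  qed
  then show "\<exists>S\<in>B. \<forall>(x,y)\<in>F. \<bar>inner (blinfun_apply (Ts - S) x) y\<bar> < e" using Ss by blast
qed

lemma wcl_comp:
  assumes B: "rstar B" and T1: "T1 \<in> wcl B" and T2: "T2 \<in> wcl B"
  shows "T1 o\<^sub>L T2 \<in> wcl B"
proof (rule wclI)
  fix F :: "('a \<times> 'a) set" and e :: real assume F: "finite F" and e: "e > 0"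
  obtain S where S: "S \<in> B" "\<forall>(x,y)\<in>(\<lambda>(x,y). (blinfun_apply T2 x,y)) ` F. \<bar>inner (blinfun_apply (T1 - S) x) y\<bar> < e/2"
    using wclD[OF T1 _, of "(\<lambda>(x,y). (blinfun_apply T2 x,y)) ` F" "e/2"] F e by auto
  obtain Ss where Ss: "Ss \<in> B" "is_adjoint S Ss" using B S(1) unfolding rstar_def by blast
  obtain S' where S': "S' \<in> B" "\<forall>(x,y)\<in>(\<lambda>(x,y). (x, blinfun_apply Ss y)) ` F. \<bar>inner (blinfun_apply (T2 - S') x) y\<bar> < e/2"
    using wclD[OF T2 _, of "(\<lambda>(x,y). (x, blinfun_apply Ss y)) ` F" "e/2"] F e by auto
  have "S o\<^sub>L S' \<in> B" using B S(1) S'(1) unfolding rstar_def by blast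
  moreover have "\<forall>(x,y)\<in>F. \<bar>inner (blinfun_apply ((T1 o\<^sub>L T2) - (S o\<^sub>L S')) x) y\<bar> < e"
  proof (clarify)
    fix x y assume xy: "(x,y) \<in> F"
    have "inner (blinfun_apply ((T1 o\<^sub>L T2) - (S o\<^sub>L S')) x) y =
      inner (blinfun_apply (T1 - S) (blinfun_apply T2 x)) y + inner (blinfun_apply S (blinfun_apply (T2 - S') x)) y"
      by (simp add: minus_blinfun.rep_eq blinfun.diff_right inner_diff_left)
    also have "inner (blinfun_apply S (blinfun_apply (T2 - S') x)) y = inner (blinfun_apply (T2 - S') x) (blinfun_apply Ss y)"
      using Ss(2) unfolding is_adjoint_def by blast
    finally have eq: "inner (blinfun_apply ((T1 o\<^sub>L T2) - (S o\<^sub>L S')) x) y =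
      inner (blinfun_apply (T1 - S) (blinfun_apply T2 x)) y + inner (blinfun_apply (T2 - S') x) (blinfun_apply Ss y)" .
    have "\<bar>inner (blinfun_apply (T1 - S) (blinfun_apply T2 x)) y\<bar> < e/2" using S(2) xy by force
    moreover have "\<bar>inner (blinfun_apply (T2 - S') x) (blinfun_apply Ss y)\<bar> < e/2" using S'(2) xy by force
    ultimately show "\<bar>inner (blinfun_apply ((T1 o\<^sub>L T2) - (S o\<^sub>L S')) x) y\<bar> < e" unfolding eq by linarith
  qed
  ultimately show "\<exists>S\<in>B. \<forall>(x,y)\<in>F. \<bar>inner (blinfun_apply ((T1 o\<^sub>L T2) - S) x) y\<bar> < e" by blast
qed

lemma wcl_approx:
  assumes T: "\<And>e. e > 0 \<Longrightarrow> \<exists>T'\<in>wcl B. norm (T - T') < e"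
  shows "T \<in> wcl B"
proof (rule wclI)
  fix F :: "('a \<times> 'a) set" and e :: real assume F: "finite F" and e: "e > 0"
  define M where "M = (\<Sum>(x,y)\<in>F. norm x * norm y) + 1"
  have M: "M > 0" unfolding M_def by (auto intro!: add_nonneg_pos sum_nonneg)
  have Mb: "norm x * norm y \<le> M" if "(x,y) \<in> F" for x y
  proof -
    have "norm x * norm y \<le> (\<Sum>(x,y)\<in>F. norm x * norm y)"
      using member_le_sum[OF that, of "\<lambda>(x,y). norm x * norm y"] F by auto
    then show ?thesis unfolding M_def by simp
  qed
  obtain T' where T': "T' \<in> wcl B" "norm (T - T') < e/(2*M)" using T[of "e/(2*M)"] e M by auto
  obtain S where S: "S \<in> B" "\<forall>(x,y)\<in>F. \<bar>inner (blinfun_apply (T' - S) x) y\<bar> < e/2"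
    using wclD[OF T'(1) F, of "e/2"] e by auto
  have "\<forall>(x,y)\<in>F. \<bar>inner (blinfun_apply (T - S) x) y\<bar> < e"
  proof clarify
    fix x y assume xy: "(x,y) \<in> F"
    have eq: "inner (blinfun_apply (T - S) x) y = inner (blinfun_apply (T - T') x) y + inner (blinfun_apply (T' - S) x) y"
      by (simp add: blinfun.diff_left inner_diff_left)
    have "\<bar>inner (blinfun_apply (T - T') x) y\<bar> \<le> norm (blinfun_apply (T - T') x) * norm y"
      by (rule Cauchy_Schwarz_ineq2)
    also have "\<dots> \<le> norm (T - T') * norm x * norm y" by (simp add: mult_right_mono norm_blinfun)
    also have "\<dots> = norm (T - T') * (norm x * norm y)" by simp
    also have "\<dots> \<le> norm (T - T') * M" using Mb[OF xy] by (simp add: mult_left_mono)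
    also have "\<dots> \<le> e/(2*M) * M" using T'(2) M by (intro mult_right_mono) auto
    also have "\<dots> = e/2" using M by simp
    finally have "\<bar>inner (blinfun_apply (T - T') x) y\<bar> \<le> e/2" .
    moreover have "\<bar>inner (blinfun_apply (T' - S) x) y\<bar> < e/2" using S(2) xy by auto
    ultimately show "\<bar>inner (blinfun_apply (T - S) x) y\<bar> < e" unfolding eq by linarith
  qed
  then show "\<exists>S\<in>B. \<forall>(x,y)\<in>F. \<bar>inner (blinfun_apply (T - S) x) y\<bar> < e" using S by blast
qed

lemma wcl_closed: "closed (wcl B)"
proof -
  have "closure (wcl B) \<subseteq> wcl B"
  proof
    fix T assume "T \<in> closure (wcl B)"
    then have "\<forall>e>0. \<exists>T'\<in>wcl B. dist T' T < e" by (simp add: closure_approachable)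
    then show "T \<in> wcl B" by (intro wcl_approx) (metis dist_norm norm_minus_commute)
  qed
  then show ?thesis by (simp add: closure_subset_eq)
qed




definition tN :: "'i set \<Rightarrow> ('i \<Rightarrow> 'h::real_inner) \<Rightarrow> real" where
  "tN I u = (\<Sum>i\<in>I. (norm (u i))^2)"

definition tI :: "'i set \<Rightarrow> ('i \<Rightarrow> 'h::real_inner) \<Rightarrow> ('i \<Rightarrow> 'h) \<Rightarrow> real" where
  "tI I u v = (\<Sum>i\<in>I. inner (u i) (v i))"

lemma tN_nonneg: "tN I u \<ge> 0" unfolding tN_def by (auto intro: sum_nonneg)

lemma tN_coord: "finite I \<Longrightarrow> i \<in> I \<Longrightarrow> (norm (u i))^2 \<le> tN I u"
  unfolding tN_def by (rule member_le_sum) auto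

lemma para_h: "(norm (a + b))^2 + (norm (a - b))^2 = 2 * (norm a)^2 + 2 * (norm (b::'h::real_inner))^2"
  by (simp add: power2_norm_eq_inner inner_add_left inner_add_right inner_diff_left inner_diff_right inner_commute)

lemma expand_h: "(norm (a - l *\<^sub>R b))^2 = (norm a)^2 - 2 * l * inner a b + l^2 * (norm (b::'h::real_inner))^2"
  by (simp only: power2_norm_eq_inner) (simp add: inner_diff_left inner_diff_right inner_commute power2_eq_square algebra_simps)

lemma tN_expand: "tN I (\<lambda>i. a i - l *\<^sub>R b i) = tN I a - 2 * l * tI I a b + l^2 * tN I b"
  unfolding tN_def tI_def by (simp add: expand_h sum.distrib sum_subtractf sum_distrib_left)

lemma tN_para: "tN I (\<lambda>i. a i + b i) + tN I (\<lambda>i. a i - b i) = 2 * tN I a + 2 * tN I b"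
  unfolding tN_def by (simp add: para_h sum.distrib[symmetric] sum_distrib_left)

lemma tN_scale: "tN I (\<lambda>i. c *\<^sub>R u i) = c^2 * tN I u"
  unfolding tN_def by (simp add: sum_distrib_left power_mult_distrib)

lemma tI_CS: "\<bar>tI I u v\<bar> \<le> sqrt (tN I u) * sqrt (tN I v)"
proof -
  have "\<bar>tI I u v\<bar> \<le> (\<Sum>i\<in>I. norm (u i) * norm (v i))"
    unfolding tI_def by (rule order_trans[OF sum_abs]) (intro sum_mono Cauchy_Schwarz_ineq2)
  also have "\<dots> \<le> sqrt (\<Sum>i\<in>I. (norm (u i))^2) * sqrt (\<Sum>i\<in>I. (norm (v i))^2)"
  proof -
    have "(\<Sum>i\<in>I. norm (u i) * norm (v i))^2 \<le> (\<Sum>i\<in>I. (norm (u i))^2) * (\<Sum>i\<in>I. (norm (v i))^2)"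
      by (rule Cauchy_Schwarz_ineq_sum)
    then have "sqrt ((\<Sum>i\<in>I. norm (u i) * norm (v i))^2) \<le> sqrt ((\<Sum>i\<in>I. (norm (u i))^2) * (\<Sum>i\<in>I. (norm (v i))^2))"
      by (rule real_sqrt_le_mono)
    then show ?thesis by (simp add: real_sqrt_mult)
  qed
  finally show ?thesis unfolding tN_def .
qed

lemma tN_lim:
  assumes "finite I" "\<And>i. i \<in> I \<Longrightarrow> (\<lambda>n. f n i) \<longlonglongrightarrow> g i"
  shows "(\<lambda>n. tN I (f n)) \<longlonglongrightarrow> tN I g"
  unfolding tN_def by (intro tendsto_intros assms)

lemma proj:
  fixes t :: "'i \<Rightarrow> 'h::{real_inner,complete_space}"
  assumes I: "finite I" and W0: "(\<lambda>i. 0) \<in> W"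
    and Wadd: "\<And>u v. u \<in> W \<Longrightarrow> v \<in> W \<Longrightarrow> (\<lambda>i. u i + v i) \<in> W"
    and Wsc: "\<And>u c. u \<in> W \<Longrightarrow> (\<lambda>i. c *\<^sub>R u i) \<in> W"
  shows "\<exists>w. (\<forall>e>0. \<exists>v\<in>W. tN I (\<lambda>i. w i - v i) < e) \<and> (\<forall>v\<in>W. tI I (\<lambda>i. t i - w i) v = 0)"
proof -
  define D where "D = (\<lambda>v. tN I (\<lambda>i. t i - v i)) ` W"
  define d where "d = Inf D"
  have Dne: "D \<noteq> {}" using W0 unfolding D_def by auto
  have Dbdd: "bdd_below D" unfolding D_def by (auto intro!: bdd_belowI[of _ 0] tN_nonneg)
  have dle: "d \<le> tN I (\<lambda>i. t i - v i)" if "v \<in> W" for v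
    unfolding d_def D_def using that Dbdd D_def by (auto intro!: cInf_lower)
  have "\<exists>v\<in>W. tN I (\<lambda>i. t i - v i) < d + 1/(real n + 1)" for n
  proof -
    have "Inf D < d + 1/(real n + 1)" unfolding d_def by simp
    then obtain x where "x \<in> D" "x < d + 1/(real n + 1)" using cInf_less_iff[OF Dne Dbdd] by blast
    then show ?thesis unfolding D_def by auto
  qed
  then obtain vs where vs: "\<And>n. vs n \<in> W" "\<And>n. tN I (\<lambda>i. t i - vs n i) < d + 1/(real n + 1)"
    by metis
  have cauchy: "tN I (\<lambda>i. vs n i - vs m i) \<le> 2/(real n + 1) + 2/(real m + 1)" for n m
  proof -
    define mid where "mid = (\<lambda>i. (1/2) *\<^sub>R (vs n i + vs m i))"
    have "mid \<in> W" unfolding mid_def by (intro Wsc Wadd vs)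
    then have dm: "d \<le> tN I (\<lambda>i. t i - mid i)" by (rule dle)
    have e1: "(\<lambda>i. (t i - vs n i) + (t i - vs m i)) = (\<lambda>i. 2 *\<^sub>R (t i - mid i))"
      unfolding mid_def by (auto simp: algebra_simps scaleR_2)
    have e2: "(\<lambda>i. (t i - vs n i) - (t i - vs m i)) = (\<lambda>i. vs m i - vs n i)" by auto
    have "tN I (\<lambda>i. vs m i - vs n i) = 2 * tN I (\<lambda>i. t i - vs n i) + 2 * tN I (\<lambda>i. t i - vs m i) - 4 * tN I (\<lambda>i. t i - mid i)"
      using tN_para[of I "\<lambda>i. t i - vs n i" "\<lambda>i. t i - vs m i"] unfolding e1 e2 tN_scale by simp
    also have "\<dots> \<le> 2/(real n + 1) + 2/(real m + 1)" using vs(2)[of n] vs(2)[of m] dm by simp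
    finally have "tN I (\<lambda>i. vs m i - vs n i) \<le> 2/(real n + 1) + 2/(real m + 1)" .
    moreover have "tN I (\<lambda>i. vs m i - vs n i) = tN I (\<lambda>i. vs n i - vs m i)"
      unfolding tN_def by (simp add: norm_minus_commute)
    ultimately show ?thesis by simp
  qed
  have conv: "convergent (\<lambda>n. vs n i)" if i: "i \<in> I" for i
  proof -
    have "Cauchy (\<lambda>n. vs n i)"
    proof (rule metric_CauchyI)
      fix e :: real assume e: "e > 0"
      obtain K :: nat where K: "4 / e^2 < real K" using reals_Archimedean2 by blast
      have "dist (vs n i) (vs m i) < e" if "n \<ge> K" "m \<ge> K" for n m
      proof -
        have "(dist (vs n i) (vs m i))^2 \<le> tN I (\<lambda>i. vs n i - vs m i)"
          using tN_coord[OF I i, of "\<lambda>i. vs n i - vs m i"] by (simp add: dist_norm)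
        also have "\<dots> \<le> 2/(real n + 1) + 2/(real m + 1)" by (rule cauchy)
        also have "\<dots> \<le> 2/(real K + 1) + 2/(real K + 1)"
          using that by (intro add_mono divide_left_mono) auto
        also have "\<dots> < e^2"
        proof -
          have "4 < e^2 * real K" using K e by (simp add: field_simps)
          moreover have "e^2 > 0" using e by simp
          ultimately have "4 < e^2 * (real K + 1)" by (simp only: distrib_left mult_1_right)
          moreover have "2/(real K + 1) + 2/(real K + 1) = 4/(real K + 1)" by (subst add_divide_distrib[symmetric]) simp
          ultimately show ?thesis by (simp add: pos_divide_less_eq mult.commute)
        qed
        finally have "(dist (vs n i) (vs m i))^2 < e^2" .
        then show ?thesis using e by (smt (verit) power_mono zero_le_dist)
      qed
      then show "\<exists>M. \<forall>m\<ge>M. \<forall>n\<ge>M. dist (vs m i) (vs n i) < e" by blast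
    qed
    then show ?thesis by (simp add: Cauchy_convergent_iff)
  qed
  define w where "w = (\<lambda>i. lim (\<lambda>n. vs n i))"
  have wl: "(\<lambda>n. vs n i) \<longlonglongrightarrow> w i" if "i \<in> I" for i
    unfolding w_def using conv[OF that] by (simp add: convergent_LIMSEQ_iff)
  have l1: "(\<lambda>n. tN I (\<lambda>i. w i - vs n i)) \<longlonglongrightarrow> tN I (\<lambda>i. w i - w i)"
    by (rule tN_lim[OF I]) (intro tendsto_intros wl, assumption)
  then have l1': "(\<lambda>n. tN I (\<lambda>i. w i - vs n i)) \<longlonglongrightarrow> 0" by (simp add: tN_def)
  have part1: "\<forall>e>0. \<exists>v\<in>W. tN I (\<lambda>i. w i - v i) < e"
  proof (intro allI impI)
    fix e :: real assume "e > 0"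
    obtain no where "\<forall>n\<ge>no. norm (tN I (\<lambda>i. w i - vs n i) - 0) < e"
      using LIMSEQ_D[OF l1' \<open>e > 0\<close>] by blast
    then have "\<bar>tN I (\<lambda>i. w i - vs no i)\<bar> < e" by auto
    then show "\<exists>v\<in>W. tN I (\<lambda>i. w i - v i) < e" using vs(1)[of no] by (intro bexI[of _ "vs no"]) auto
  qed
  have l2: "(\<lambda>n. tN I (\<lambda>i. t i - vs n i)) \<longlonglongrightarrow> tN I (\<lambda>i. t i - w i)"
    by (rule tN_lim[OF I]) (intro tendsto_intros wl, assumption)
  have l3: "(\<lambda>n. tN I (\<lambda>i. t i - vs n i)) \<longlonglongrightarrow> d"
  proof (rule tendsto_sandwich[where f="\<lambda>n. d" and h="\<lambda>n. d + 1/(real n + 1)"])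
    show "\<forall>\<^sub>F n in sequentially. d \<le> tN I (\<lambda>i. t i - vs n i)" using dle vs(1) by auto
    show "\<forall>\<^sub>F n in sequentially. tN I (\<lambda>i. t i - vs n i) \<le> d + 1/(real n + 1)"
      using vs(2) by (intro always_eventually allI less_imp_le)
    show "(\<lambda>n. d) \<longlonglongrightarrow> d" by simp
    show "(\<lambda>n. d + 1/(real n + 1)) \<longlonglongrightarrow> d"
      using tendsto_add[OF tendsto_const[of d] LIMSEQ_inverse_real_of_nat] by (simp add: inverse_eq_divide add.commute)
  qed
  have Nz: "tN I (\<lambda>i. t i - w i) = d" using LIMSEQ_unique[OF l2 l3] .
  have part2: "tI I (\<lambda>i. t i - w i) v = 0" if v: "v \<in> W" for v
  proof -
    define z where "z = (\<lambda>i. t i - w i)"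
    define c where "c = tI I z v"
    have ge: "tN I z \<le> tN I (\<lambda>i. z i - l *\<^sub>R v i)" for l
    proof -
      have "(\<lambda>n. tN I (\<lambda>i. t i - (vs n i + l *\<^sub>R v i))) \<longlonglongrightarrow> tN I (\<lambda>i. t i - (w i + l *\<^sub>R v i))"
        by (rule tN_lim[OF I]) (intro tendsto_intros wl, assumption)
      moreover have "\<forall>n. d \<le> tN I (\<lambda>i. t i - (vs n i + l *\<^sub>R v i))"
        using dle Wadd Wsc vs(1) v by blast
      ultimately have "d \<le> tN I (\<lambda>i. t i - (w i + l *\<^sub>R v i))"
        by (intro LIMSEQ_le_const) auto
      then show ?thesis unfolding z_def Nz by (simp add: diff_diff_eq)
    qed
    define l where "l = c / (tN I v + 1)"
    have Nv: "tN I v \<ge> 0" by (rule tN_nonneg)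
    have "tN I z \<le> tN I z - 2 * l * c + l^2 * tN I v"
      using ge[of l] unfolding tN_expand c_def .
    then have "2 * l * c \<le> l^2 * tN I v" by simp
    then have h: "(2 * l * c) * (tN I v + 1)^2 \<le> (l^2 * tN I v) * (tN I v + 1)^2"
      by (rule mult_right_mono) simp
    have lk: "l * (tN I v + 1) = c" unfolding l_def using Nv by simp
    have "(2 * l * c) * (tN I v + 1)^2 = 2 * c * (l * (tN I v + 1)) * (tN I v + 1)"
      by (simp add: power2_eq_square)
    also have "\<dots> = 2 * c^2 * (tN I v + 1)" unfolding lk by (simp add: power2_eq_square)
    finally have e1: "(2 * l * c) * (tN I v + 1)^2 = 2 * c^2 * (tN I v + 1)" .
    have "(l^2 * tN I v) * (tN I v + 1)^2 = (l * (tN I v + 1))^2 * tN I v"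
      by (simp add: power_mult_distrib)
    then have e2: "(l^2 * tN I v) * (tN I v + 1)^2 = c^2 * tN I v" unfolding lk .
    have "2 * c^2 * (tN I v + 1) \<le> c^2 * tN I v" using h unfolding e1 e2 .
    then have "c^2 * (tN I v + 2) \<le> 0" by (simp add: algebra_simps)
    moreover have "tN I v + 2 > 0" using Nv by simp
    ultimately have "c^2 \<le> 0" by (simp add: mult_le_0_iff)
    then show ?thesis unfolding c_def z_def by simp
  qed
  show ?thesis using part1 part2 by blast
qed




lemma riesz:
  fixes f :: "'h::{real_inner,complete_space} \<Rightarrow> real"
  assumes f: "bounded_linear f"
  shows "\<exists>w. \<forall>x. f x = inner x w"
proof (cases "\<forall>x. f x = 0")
  case True then show ?thesis by (intro exI[of _ 0]) simp
next
  case False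
  interpret f: bounded_linear f by (rule f)
  obtain a0 where a0: "f a0 \<noteq> 0" using False by blast
  define a where "a = (1 / f a0) *\<^sub>R a0"
  have fa: "f a = 1" unfolding a_def using a0 by (simp add: f.scale)
  define W where "W = {u :: unit \<Rightarrow> 'h. f (u ()) = 0}"
  have W0: "(\<lambda>i. 0) \<in> W" unfolding W_def by simp
  have Wadd: "\<And>u v. u \<in> W \<Longrightarrow> v \<in> W \<Longrightarrow> (\<lambda>i. u i + v i) \<in> W" unfolding W_def by (simp add: f.add)
  have Wsc: "\<And>u c. u \<in> W \<Longrightarrow> (\<lambda>i. c *\<^sub>R u i) \<in> W" unfolding W_def by (simp add: f.scale)
  have fin: "finite (UNIV :: unit set)" by simp
  obtain w where w1: "\<forall>e>0. \<exists>v\<in>W. tN UNIV (\<lambda>i. w i - v i) < e"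
    and w2: "\<forall>v\<in>W. tI UNIV (\<lambda>i. a - w i) v = 0"
    using proj[OF fin W0 Wadd Wsc, of "\<lambda>i. a"] by blast
  have cl: "closed {x. f x = 0}"
    by (intro closed_Collect_eq continuous_on_const) (simp add: linear_continuous_on f)
  have "w () \<in> closure {x. f x = 0}"
  proof (subst closure_approachable, intro allI impI)
    fix e :: real assume e: "e > 0"
    have "e^2 > 0" using e by simp
    then obtain v where v: "v \<in> W" "tN UNIV (\<lambda>i. w i - v i) < e^2" using w1 by blast
    have "(norm (w () - v ()))^2 < e^2" using v(2) unfolding tN_def by (simp add: UNIV_unit)
    then have "norm (w () - v ()) < e" using e by (smt (verit) power_mono norm_ge_zero)
    then show "\<exists>y\<in>{x. f x = 0}. dist y (w ()) < e" using v(1) unfolding W_def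
      by (intro bexI[of _ "v ()"]) (auto simp: dist_norm norm_minus_commute)
  qed
  then have fw: "f (w ()) = 0" using cl closure_closed by blast
  define z where "z = a - w ()"
  have fz: "f z = 1" unfolding z_def using fa fw by (simp add: f.diff)
  have orth: "inner z k = 0" if "f k = 0" for k
    using w2[rule_format, of "\<lambda>_. k"] that unfolding W_def tI_def z_def by (simp add: UNIV_unit)
  have z0: "z \<noteq> 0" using fz by auto
  have rep: "f x = inner x ((1 / (inner z z)) *\<^sub>R z)" for x
  proof -
    have "f (x - f x *\<^sub>R z) = 0" using fz by (simp add: f.diff f.scale)
    then have "inner z (x - f x *\<^sub>R z) = 0" by (rule orth)
    then have "inner z x = f x * inner z z" by (simp add: inner_diff_right)
    then show ?thesis using z0 by (simp add: inner_commute)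
  qed
  then show ?thesis by blast
qed

lemma adj_exists:
  fixes T :: "'h::{real_inner,complete_space} \<Rightarrow>\<^sub>L 'h"
  shows "\<exists>S. is_adjoint T S"
proof -
  have "\<forall>y. \<exists>w. \<forall>x. inner (blinfun_apply T x) y = inner x w"
  proof
    fix y
    have "bounded_linear (\<lambda>x. inner (blinfun_apply T x) y)"
      by (intro bounded_linear_compose[OF bounded_linear_inner_left] blinfun.bounded_linear_right)
    then show "\<exists>w. \<forall>x. inner (blinfun_apply T x) y = inner x w" by (rule riesz)
  qed
  then obtain g where g: "\<And>x y. inner (blinfun_apply T x) y = inner x (g y)" by metis
  have uniq: "a = b" if "\<And>x. inner x a = inner x b" for a b :: 'h
  proof -
    have "inner (a - b) a = inner (a - b) b" using that by blast
    then have "inner (a - b) (a - b) = 0" by (simp add: inner_diff_right)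
    then show ?thesis by simp
  qed
  have ga: "g (y1 + y2) = g y1 + g y2" for y1 y2
    by (rule uniq) (simp add: g[symmetric] inner_add_right)
  have gs: "g (r *\<^sub>R y) = r *\<^sub>R g y" for r y
    by (rule uniq) (simp add: g[symmetric])
  have gb: "norm (g y) \<le> norm y * norm T" for y
  proof -
    have "(norm (g y))^2 = inner (blinfun_apply T (g y)) y"
      by (simp add: g power2_norm_eq_inner)
    also have "\<dots> \<le> norm (blinfun_apply T (g y)) * norm y" by (rule norm_cauchy_schwarz)
    also have "\<dots> \<le> norm T * norm (g y) * norm y" by (simp add: mult_right_mono norm_blinfun)
    finally have h: "(norm (g y))^2 \<le> norm y * norm T * norm (g y)" by (simp add: algebra_simps)
    show ?thesis
    proof (cases "norm (g y) = 0")
      case True then show ?thesis by simp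
    next
      case False then have "norm (g y) > 0" by simp
      with h show ?thesis by (simp add: power2_eq_square mult_le_cancel_right)
    qed
  qed
  have bl: "bounded_linear g" by (rule bounded_linear_intro[OF ga gs gb])
  have "is_adjoint T (Blinfun g)"
    unfolding is_adjoint_def using bounded_linear_Blinfun_apply[OF bl] g by simp
  then show ?thesis by blast
qed




lemma small0:
  fixes a K :: real
  assumes K: "K \<ge> 0" and h: "\<And>e. e > 0 \<Longrightarrow> \<bar>a\<bar> \<le> K * e"
  shows "a = 0"
proof (rule ccontr)
  assume "a \<noteq> 0"
  then have pa: "\<bar>a\<bar> > 0" by simp
  have "\<bar>a\<bar> \<le> K * (\<bar>a\<bar> / (K + 1))" using h[of "\<bar>a\<bar> / (K+1)"] pa K by simp
  also have "\<dots> < \<bar>a\<bar>" using pa K by (simp add: field_simps)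
  finally show False by simp
qed

lemma tI_diff_right: "tI I z (\<lambda>i. a i - b i) = tI I z a - tI I z b"
  unfolding tI_def by (simp add: inner_diff_right sum_subtractf)

lemma tN_tI: "tN I z = tI I z z"
  unfolding tN_def tI_def by (simp add: power2_norm_eq_inner)

lemma sot_approx:
  fixes Z Zs :: "'h::{real_inner,complete_space} \<Rightarrow>\<^sub>L 'h"
  assumes B: "rstar B" and Z: "Z \<in> wcl B" and adj: "is_adjoint Z Zs"
    and P: "finite P" and Q: "finite Q" and e: "e > 0"
  shows "\<exists>S\<in>B. \<exists>Ss\<in>B. is_adjoint S Ss \<and> (\<forall>x\<in>P. norm (blinfun_apply (Z - S) x) < e) \<and>
           (\<forall>y\<in>Q. norm (blinfun_apply (Zs - Ss) y) < e)"
proof -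
  define \<Phi> :: "('h \<Rightarrow>\<^sub>L 'h) \<Rightarrow> ('h \<Rightarrow>\<^sub>L 'h) \<Rightarrow> 'h + 'h \<Rightarrow> 'h" where
    "\<Phi> S Ss = (\<lambda>i. case i of Inl x \<Rightarrow> blinfun_apply S x | Inr y \<Rightarrow> blinfun_apply Ss y)" for S Ss
  define I where "I = Inl ` P \<union> Inr ` Q"
  have I: "finite I" unfolding I_def using P Q by simp
  define W where "W = {\<Phi> S Ss | S Ss. S \<in> B \<and> Ss \<in> B \<and> is_adjoint S Ss}"
  have B0: "0 \<in> B" and Badd: "\<And>S T. S \<in> B \<Longrightarrow> T \<in> B \<Longrightarrow> S + T \<in> B"
    and Bsc: "\<And>r T. T \<in> B \<Longrightarrow> r *\<^sub>R T \<in> B"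
    and Badj: "\<And>T. T \<in> B \<Longrightarrow> \<exists>S\<in>B. is_adjoint T S"
    using B unfolding rstar_def by auto
  have W0: "(\<lambda>i. 0) \<in> W"
  proof -
    have "(\<lambda>i. 0) = \<Phi> 0 0" unfolding \<Phi>_def by (auto split: sum.split)
    then show ?thesis unfolding W_def using B0 adj_zero by blast
  qed
  have Wadd: "(\<lambda>i. u i + v i) \<in> W" if uv: "u \<in> W" "v \<in> W" for u v
  proof -
    obtain S1 Ss1 where 1: "u = \<Phi> S1 Ss1" "S1 \<in> B" "Ss1 \<in> B" "is_adjoint S1 Ss1" using uv(1) unfolding W_def by blast
    obtain S2 Ss2 where 2: "v = \<Phi> S2 Ss2" "S2 \<in> B" "Ss2 \<in> B" "is_adjoint S2 Ss2" using uv(2) unfolding W_def by blast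
    have "(\<lambda>i. u i + v i) = \<Phi> (S1 + S2) (Ss1 + Ss2)" unfolding 1 2 \<Phi>_def
      by (auto split: sum.split simp: plus_blinfun.rep_eq)
    then show ?thesis unfolding W_def using 1 2 Badd adj_add by blast
  qed
  have Wsc: "(\<lambda>i. c *\<^sub>R u i) \<in> W" if uu: "u \<in> W" for u c
  proof -
    obtain S1 Ss1 where 1: "u = \<Phi> S1 Ss1" "S1 \<in> B" "Ss1 \<in> B" "is_adjoint S1 Ss1" using uu unfolding W_def by blast
    have "(\<lambda>i. c *\<^sub>R u i) = \<Phi> (c *\<^sub>R S1) (c *\<^sub>R Ss1)" unfolding 1 \<Phi>_def
      by (auto split: sum.split simp: scaleR_blinfun.rep_eq)
    then show ?thesis unfolding W_def using 1 Bsc adj_scale by blast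
  qed
  define t where "t = \<Phi> Z Zs"
  obtain w where w1: "\<forall>e>0. \<exists>v\<in>W. tN I (\<lambda>i. w i - v i) < e"
    and w2: "\<forall>v\<in>W. tI I (\<lambda>i. t i - w i) v = 0"
    using proj[OF I W0 Wadd Wsc, of t] by blast
  define z where "z = (\<lambda>i. t i - w i)"
  have zw: "tI I z w = 0"
  proof (rule small0[of "sqrt (tN I z)"])
    show "0 \<le> sqrt (tN I z)" by (simp add: tN_nonneg)
    fix e :: real assume e: "e > 0"
    then have "e^2 > 0" by simp
    then obtain v where v: "v \<in> W" "tN I (\<lambda>i. w i - v i) < e^2" using w1 by blast
    have "tI I z w = tI I z (\<lambda>i. w i - v i) + tI I z v"
      using tI_diff_right[of I z w v] by simp
    also have "tI I z v = 0" using w2 v(1) unfolding z_def by blast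
    finally have "tI I z w = tI I z (\<lambda>i. w i - v i)" by simp
    then have "\<bar>tI I z w\<bar> \<le> sqrt (tN I z) * sqrt (tN I (\<lambda>i. w i - v i))" using tI_CS by metis
    also have "\<dots> \<le> sqrt (tN I z) * e"
    proof (rule mult_left_mono)
      have "sqrt (tN I (\<lambda>i. w i - v i)) \<le> sqrt (e^2)" using v(2) by (intro real_sqrt_le_mono) simp
      then show "sqrt (tN I (\<lambda>i. w i - v i)) \<le> e" using e by simp
    qed (simp add: tN_nonneg)
    finally show "\<bar>tI I z w\<bar> \<le> sqrt (tN I z) * e" .
  qed
  have zt: "tI I z t = 0"
  proof (rule small0[of "real (card I)"])
    show "0 \<le> real (card I)" by simp
    fix e :: real assume e: "e > 0"
    define F where "F = (\<lambda>i. case i of Inl x \<Rightarrow> (x, z i) | Inr y \<Rightarrow> (z i, y)) ` I"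
    have F: "finite F" unfolding F_def using I by simp
    obtain S where S: "S \<in> B" "\<forall>(x,y)\<in>F. \<bar>inner (blinfun_apply (Z - S) x) y\<bar> < e"
      using wclD[OF Z F e] by blast
    obtain Ss where Ss: "Ss \<in> B" "is_adjoint S Ss" using Badj[OF S(1)] by blast
    have vW: "\<Phi> S Ss \<in> W" unfolding W_def using S Ss by blast
    have ad: "is_adjoint (Z - S) (Zs - Ss)" by (rule adj_diff[OF adj Ss(2)])
    have each: "\<bar>inner (z i) (t i - \<Phi> S Ss i)\<bar> \<le> e" if i: "i \<in> I" for i
    proof (cases i)
      case (Inl x)
      have "(x, z i) \<in> F" unfolding F_def using i Inl by force
      then have "\<bar>inner (blinfun_apply (Z - S) x) (z i)\<bar> < e" using S(2) by blast
      then show ?thesis unfolding t_def \<Phi>_def Inl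
        by (simp add: inner_commute minus_blinfun.rep_eq)
    next
      case (Inr y)
      have "(z i, y) \<in> F" unfolding F_def using i Inr by force
      then have "\<bar>inner (blinfun_apply (Z - S) (z i)) y\<bar> < e" using S(2) by blast
      moreover have "inner (blinfun_apply (Z - S) (z i)) y = inner (z i) (blinfun_apply (Zs - Ss) y)"
        using ad unfolding is_adjoint_def by blast
      ultimately show ?thesis unfolding t_def \<Phi>_def Inr
        by (simp add: minus_blinfun.rep_eq)
    qed
    have "tI I z t = tI I z (\<lambda>i. t i - \<Phi> S Ss i) + tI I z (\<Phi> S Ss)"
      using tI_diff_right[of I z t "\<Phi> S Ss"] by simp
    also have "tI I z (\<Phi> S Ss) = 0" using w2 vW unfolding z_def by blast
    finally have "tI I z t = (\<Sum>i\<in>I. inner (z i) (t i - \<Phi> S Ss i))" unfolding tI_def by simp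
    then have "\<bar>tI I z t\<bar> \<le> (\<Sum>i\<in>I. \<bar>inner (z i) (t i - \<Phi> S Ss i)\<bar>)" by (simp add: sum_abs)
    also have "\<dots> \<le> (\<Sum>i\<in>I. e)" by (rule sum_mono) (rule each)
    also have "\<dots> = real (card I) * e" by simp
    finally show "\<bar>tI I z t\<bar> \<le> real (card I) * e" .
  qed
  have "tN I z = 0"
    using zw zt tI_diff_right[of I z t w] unfolding tN_tI by (simp add: z_def)
  then have "\<forall>i\<in>I. (norm (z i))^2 = 0" unfolding tN_def using I by (simp add: sum_nonneg_eq_0_iff)
  then have tw: "t i = w i" if "i \<in> I" for i using that unfolding z_def by simp
  have "e^2 > 0" using e by simp
  then obtain v where v: "v \<in> W" "tN I (\<lambda>i. w i - v i) < e^2" using w1 by blast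
  obtain S Ss where SS: "v = \<Phi> S Ss" "S \<in> B" "Ss \<in> B" "is_adjoint S Ss" using v(1) unfolding W_def by blast
  have co: "norm (t i - v i) < e" if "i \<in> I" for i
  proof -
    have "(norm (w i - v i))^2 \<le> tN I (\<lambda>i. w i - v i)" by (rule tN_coord[OF I that])
    then have "(norm (t i - v i))^2 < e^2" using v(2) tw[OF that] by simp
    then show ?thesis using e by (smt (verit) power_mono norm_ge_zero)
  qed
  have "\<forall>x\<in>P. norm (blinfun_apply (Z - S) x) < e"
  proof
    fix x assume "x \<in> P"
    then have "Inl x \<in> I" unfolding I_def by blast
    from co[OF this] show "norm (blinfun_apply (Z - S) x) < e"
      unfolding SS(1) t_def \<Phi>_def by (simp add: minus_blinfun.rep_eq)
  qed
  moreover have "\<forall>y\<in>Q. norm (blinfun_apply (Zs - Ss) y) < e"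
  proof
    fix y assume "y \<in> Q"
    then have "Inr y \<in> I" unfolding I_def by blast
    from co[OF this] show "norm (blinfun_apply (Zs - Ss) y) < e"
      unfolding SS(1) t_def \<Phi>_def by (simp add: minus_blinfun.rep_eq)
  qed
  ultimately show ?thesis using SS by blast
qed




lemmas ops = plus_blinfun.rep_eq minus_blinfun.rep_eq scaleR_blinfun.rep_eq blinfun_apply_blinfun_compose
  blinfun.add_right blinfun.diff_right blinfun.scaleR_right blinfun.zero_right zero_blinfun.rep_eq

lemma form_CS:
  fixes R :: "'h::{real_inner,complete_space} \<Rightarrow>\<^sub>L 'h"
  assumes sym: "is_adjoint R R" and pos: "\<And>x. inner (blinfun_apply R x) x \<ge> 0"
  shows "(inner (blinfun_apply R x) y)^2 \<le> inner (blinfun_apply R x) x * inner (blinfun_apply R y) y"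
proof -
  define a where "a = inner (blinfun_apply R x) x"
  define b where "b = inner (blinfun_apply R x) y"
  define c where "c = inner (blinfun_apply R y) y"
  have ba: "inner (blinfun_apply R y) x = b"
    unfolding b_def using sym unfolding is_adjoint_def by (metis inner_commute)
  have q: "0 \<le> a + 2 * l * b + l^2 * c" for l
  proof -
    have "0 \<le> inner (blinfun_apply R (x + l *\<^sub>R y)) (x + l *\<^sub>R y)" by (rule pos)
    also have "\<dots> = a + 2 * l * b + l^2 * c"
      unfolding a_def b_def c_def using ba[unfolded b_def]
      by (simp add: blinfun.add_right blinfun.scaleR_right inner_add_left inner_add_right power2_eq_square algebra_simps)
    finally show ?thesis .
  qed
  have c0: "c \<ge> 0" unfolding c_def by (rule pos)
  have a0: "a \<ge> 0" unfolding a_def by (rule pos)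
  show ?thesis
  proof (cases "c = 0")
    case True
    have "b = 0"
    proof (rule ccontr)
      assume "b \<noteq> 0"
      have "0 \<le> a + 2 * (- (a + 1) / (2 * b)) * b" using q[of "- (a + 1) / (2 * b)"] True by simp
      also have "\<dots> = -1" using \<open>b \<noteq> 0\<close> by (simp add: field_simps)
      finally show False by simp
    qed
    then show ?thesis unfolding a_def[symmetric] b_def[symmetric] c_def[symmetric] using True by simp
  next
    case False
    then have cp: "c > 0" using c0 by simp
    have "0 \<le> a + 2 * (- b / c) * b + (- b / c)^2 * c" by (rule q)
    also have "\<dots> = a - b^2 / c" using cp by (simp add: field_simps power2_eq_square)
    finally have "b^2 / c \<le> a" by simp
    then have "b^2 \<le> a * c" using cp by (simp add: pos_divide_le_eq)
    then show ?thesis unfolding a_def[symmetric] b_def[symmetric] c_def[symmetric] .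
  qed
qed

lemma pos_norm_bound:
  fixes R :: "'h::{real_inner,complete_space} \<Rightarrow>\<^sub>L 'h"
  assumes sym: "is_adjoint R R" and pos: "\<And>x. inner (blinfun_apply R x) x \<ge> 0"
    and up: "\<And>x. inner (blinfun_apply R x) x \<le> q * (norm x)^2" and q: "q \<ge> 0"
  shows "norm R \<le> q"
proof (rule norm_blinfun_bound[OF q])
  fix x
  define y where "y = blinfun_apply R x"
  have "((norm y)^2)^2 = (inner y y)^2" by (simp add: power2_norm_eq_inner)
  also have "(inner y y)^2 \<le> inner y x * inner (blinfun_apply R y) y"
    using form_CS[OF sym pos, of x y] unfolding y_def by simp
  also have "\<dots> \<le> (q * (norm x)^2) * (q * (norm y)^2)"
  proof (rule mult_mono)
    show "inner y x \<le> q * (norm x)^2" unfolding y_def by (rule up)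
    show "inner (blinfun_apply R y) y \<le> q * (norm y)^2" by (rule up)
    show "0 \<le> q * (norm x)^2" using q by simp
    show "0 \<le> inner (blinfun_apply R y) y" by (rule pos)
  qed
  finally have h0: "((norm y)^2)^2 \<le> (q * (norm x)^2) * (q * (norm y)^2)" .
  have eqr: "(q * (norm x)^2) * (q * (norm y)^2) = (q * norm x)^2 * (norm y)^2"
    by (simp add: power_mult_distrib power2_eq_square)
  have h: "(norm y)^2 * (norm y)^2 \<le> (q * norm x)^2 * (norm y)^2"
  proof -
    have "(norm y)^2 * (norm y)^2 = ((norm y)^2)^2" by (rule power2_eq_square[symmetric])
    then show ?thesis using h0 eqr by simp
  qed
  show "norm y \<le> q * norm x"
  proof (cases "norm y = 0")
    case True then show ?thesis using q by simp
  next
    case False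
    then have "(norm y)^2 > 0" by simp
    with h have "(norm y)^2 \<le> (q * norm x)^2" by (rule mult_right_le_imp_le)
    then show ?thesis by (rule power2_le_imp_le) (simp add: q)
  qed
qed




primrec pw :: "('h::real_normed_vector \<Rightarrow>\<^sub>L 'h) \<Rightarrow> nat \<Rightarrow> ('h \<Rightarrow>\<^sub>L 'h)" where
  "pw R 0 = id_blinfun"
| "pw R (Suc k) = pw R k o\<^sub>L R"

lemma pw_norm: "norm (pw R k) \<le> (norm R)^k"
proof (induction k)
  case 0 then show ?case by (simp add: norm_blinfun_id_le)
next
  case (Suc k)
  have "norm (pw R (Suc k)) \<le> norm (pw R k) * norm R" by (simp add: norm_blinfun_compose)
  also have "\<dots> \<le> (norm R)^k * norm R" using Suc by (simp add: mult_right_mono)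
  finally show ?case by (simp add: mult.commute)
qed

lemma pw_comm: "R o\<^sub>L pw R k = pw R k o\<^sub>L R"
  by (induction k) (auto intro!: blinfun_eqI simp: blinfun_apply_blinfun_compose, metis blinfun_apply_blinfun_compose)

lemma bl_compL: "bounded_linear (\<lambda>Y. Y o\<^sub>L (R::'h::real_normed_vector \<Rightarrow>\<^sub>L 'h))"
  by (rule bounded_bilinear.bounded_linear_left[OF bounded_bilinear_blinfun_compose])
lemma bl_compR: "bounded_linear (\<lambda>Y. (R::'h::real_normed_vector \<Rightarrow>\<^sub>L 'h) o\<^sub>L Y)"
  by (rule bounded_bilinear.bounded_linear_right[OF bounded_bilinear_blinfun_compose])

lemma blinfun_complete:
  fixes T :: "nat \<Rightarrow> ('h::{real_normed_vector,complete_space} \<Rightarrow>\<^sub>L 'h)"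
  assumes C: "Cauchy T"
  shows "\<exists>L. T \<longlonglongrightarrow> L"
proof -
  have cx: "Cauchy (\<lambda>n. blinfun_apply (T n) x)" for x
  proof (rule metric_CauchyI)
    fix e :: real assume e: "e > 0"
    have "e / (norm x + 1) > 0" using e by (simp add: add_nonneg_pos)
    then obtain M where M: "\<forall>m\<ge>M. \<forall>n\<ge>M. dist (T m) (T n) < e / (norm x + 1)"
      using metric_CauchyD[OF C] by blast
    have "dist (blinfun_apply (T m) x) (blinfun_apply (T n) x) < e" if "m \<ge> M" "n \<ge> M" for m n
    proof -
      have "dist (blinfun_apply (T m) x) (blinfun_apply (T n) x) = norm (blinfun_apply (T m - T n) x)"
        by (simp add: dist_norm blinfun.diff_left)
      also have "\<dots> \<le> norm (T m - T n) * norm x" by (rule norm_blinfun)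
      also have "\<dots> \<le> (e / (norm x + 1)) * norm x"
        using M that by (intro mult_right_mono) (auto simp: dist_norm less_imp_le)
      also have "\<dots> < e"
      proof -
        have p: "norm x + 1 > 0" by (simp add: add_nonneg_pos)
        have "e * norm x < e * (norm x + 1)" using e by simp
        then show ?thesis using p by (simp add: pos_divide_less_eq)
      qed
      finally show ?thesis .
    qed
    then show "\<exists>M. \<forall>m\<ge>M. \<forall>n\<ge>M. dist (blinfun_apply (T m) x) (blinfun_apply (T n) x) < e" by blast
  qed
  define f where "f x = lim (\<lambda>n. blinfun_apply (T n) x)" for x
  have fl: "(\<lambda>n. blinfun_apply (T n) x) \<longlonglongrightarrow> f x" for x
    unfolding f_def using cx[of x] by (simp add: Cauchy_convergent_iff convergent_LIMSEQ_iff)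
  obtain K where K: "K > 0" "\<And>n. norm (T n) \<le> K" using Cauchy_Bseq[OF C] by (auto elim: BseqE)
  have fa: "f (x + y) = f x + f y" for x y
  proof (rule LIMSEQ_unique[OF fl])
    show "(\<lambda>n. blinfun_apply (T n) (x + y)) \<longlonglongrightarrow> f x + f y"
      by (simp add: blinfun.add_right) (intro tendsto_add fl)
  qed
  have fs: "f (r *\<^sub>R x) = r *\<^sub>R f x" for r x
  proof (rule LIMSEQ_unique[OF fl])
    show "(\<lambda>n. blinfun_apply (T n) (r *\<^sub>R x)) \<longlonglongrightarrow> r *\<^sub>R f x"
      by (simp add: blinfun.scaleR_right) (intro tendsto_scaleR tendsto_const fl)
  qed
  have fb: "norm (f x) \<le> norm x * K" for x
  proof (rule LIMSEQ_le_const2[OF tendsto_norm[OF fl]])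
    show "\<exists>N. \<forall>n\<ge>N. norm (blinfun_apply (T n) x) \<le> norm x * K"
      using K by (metis mult.commute mult_left_mono norm_blinfun norm_ge_zero order_trans)
  qed
  have bl: "bounded_linear f" by (rule bounded_linear_intro[OF fa fs fb])
  define L where "L = Blinfun f"
  have Lx: "blinfun_apply L x = f x" for x unfolding L_def using bounded_linear_Blinfun_apply[OF bl] by simp
  have "T \<longlonglongrightarrow> L"
  proof (rule LIMSEQ_I)
    fix e :: real assume e: "e > 0"
    obtain M where M: "\<forall>m\<ge>M. \<forall>n\<ge>M. dist (T m) (T n) < e/2"
      using metric_CauchyD[OF C, of "e/2"] e by auto
    have "norm (T n - L) < e" if n: "n \<ge> M" for n
    proof -
      have "norm (T n - L) \<le> e/2"
      proof (rule norm_blinfun_bound)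
        show "0 \<le> e/2" using e by simp
        fix x
        have "(\<lambda>m. norm (blinfun_apply (T n) x - blinfun_apply (T m) x)) \<longlonglongrightarrow> norm (blinfun_apply (T n) x - f x)"
          by (intro tendsto_intros fl)
        moreover have "\<forall>m\<ge>M. norm (blinfun_apply (T n) x - blinfun_apply (T m) x) \<le> e/2 * norm x"
        proof (intro allI impI)
          fix m assume m: "m \<ge> M"
          have "norm (blinfun_apply (T n) x - blinfun_apply (T m) x) = norm (blinfun_apply (T n - T m) x)"
            by (simp add: blinfun.diff_left)
          also have "\<dots> \<le> norm (T n - T m) * norm x" by (rule norm_blinfun)
          also have "\<dots> \<le> e/2 * norm x"
            using M n m by (intro mult_right_mono) (auto simp: dist_norm less_imp_le)
          finally show "norm (blinfun_apply (T n) x - blinfun_apply (T m) x) \<le> e/2 * norm x" .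
        qed
        ultimately have "norm (blinfun_apply (T n) x - f x) \<le> e/2 * norm x"
          by (intro LIMSEQ_le_const2) auto
        then show "norm (blinfun_apply (T n - L) x) \<le> e/2 * norm x"
          by (simp add: blinfun.diff_left Lx)
      qed
      then show ?thesis using e by simp
    qed
    then show "\<exists>no. \<forall>n\<ge>no. norm (T n - L) < e" by blast
  qed
  then show ?thesis by blast
qed

lemma bl_summable:
  fixes f :: "nat \<Rightarrow> ('h::{real_normed_vector,complete_space} \<Rightarrow>\<^sub>L 'h)"
  assumes sn: "summable (\<lambda>n. norm (f n))"
  shows "summable f"
proof -
  define S where "S n = (\<Sum>i<n. f i)" for n
  have key: "\<forall>e>0. \<exists>N. \<forall>m\<ge>N. \<forall>n. norm (sum (\<lambda>n. norm (f n)) {m..<n}) < e"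
    using sn unfolding summable_Cauchy by blast
  have d: "norm (S n - S m) < e" if "m \<ge> N" "n \<ge> m" "\<forall>m\<ge>N. \<forall>n. norm (sum (\<lambda>n. norm (f n)) {m..<n}) < e" for m n N e
  proof -
    have "S n - S m = sum f {m..<n}"
      unfolding S_def using sum_diff_nat_ivl[of 0 m n f] that by (simp add: atLeast0LessThan)
    then have "norm (S n - S m) \<le> sum (\<lambda>n. norm (f n)) {m..<n}" by (simp add: norm_sum)
    also have "\<dots> \<le> norm (sum (\<lambda>n. norm (f n)) {m..<n})" by simp
    also have "\<dots> < e" using that by blast
    finally show ?thesis .
  qed
  have "Cauchy S"
  proof (rule metric_CauchyI)
    fix e :: real assume "e > 0"
    then obtain N where N: "\<forall>m\<ge>N. \<forall>n. norm (sum (\<lambda>n. norm (f n)) {m..<n}) < e" using key by blast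
    have "dist (S m) (S n) < e" if "m \<ge> N" "n \<ge> N" for m n
    proof (cases "m \<le> n")
      case True then show ?thesis using d[OF that(1) True N] by (simp add: dist_norm norm_minus_commute)
    next
      case False then show ?thesis using d[OF that(2) _ N, of m] by (simp add: dist_norm)
    qed
    then show "\<exists>M. \<forall>m\<ge>M. \<forall>n\<ge>M. dist (S m) (S n) < e" by blast
  qed
  then obtain L where "S \<longlonglongrightarrow> L" using blinfun_complete by blast
  then have "f sums L" unfolding sums_def S_def by simp
  then show ?thesis by (rule sums_summable)
qed

lemma neumann:
  fixes R :: "'h::{real_inner,complete_space} \<Rightarrow>\<^sub>L 'h"
  assumes R: "norm R < 1"
  shows "summable (pw R) \<and> suminf (pw R) o\<^sub>L (id_blinfun - R) = id_blinfun \<and>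
         (id_blinfun - R) o\<^sub>L suminf (pw R) = id_blinfun"
proof -
  have sm: "summable (pw R)"
  proof (rule bl_summable)
    show "summable (\<lambda>n. norm (pw R n))"
      by (rule summable_comparison_test'[of "\<lambda>n. (norm R)^n" 0]) (use R pw_norm in auto)
  qed
  define Q where "Q = suminf (pw R)"
  have s1: "Q o\<^sub>L R = Q - id_blinfun"
  proof -
    have "Q o\<^sub>L R = (\<Sum>k. pw R k o\<^sub>L R)" unfolding Q_def by (rule bounded_linear.suminf[OF bl_compL sm])
    also have "\<dots> = (\<Sum>k. pw R (Suc k))" by simp
    also have "\<dots> = Q - id_blinfun" unfolding Q_def using suminf_split_head[OF sm] by simp
    finally show ?thesis .
  qed
  have s2: "R o\<^sub>L Q = Q - id_blinfun"
  proof -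
    have "R o\<^sub>L Q = (\<Sum>k. R o\<^sub>L pw R k)" unfolding Q_def by (rule bounded_linear.suminf[OF bl_compR sm])
    also have "\<dots> = (\<Sum>k. pw R k o\<^sub>L R)" by (simp add: pw_comm)
    also have "\<dots> = Q o\<^sub>L R" unfolding Q_def by (rule bounded_linear.suminf[OF bl_compL sm, symmetric])
    finally show ?thesis using s1 by simp
  qed
  have "Q o\<^sub>L (id_blinfun - R) = Q - (Q o\<^sub>L R)"
    by (rule blinfun_eqI) (simp add: ops)
  then have e1: "Q o\<^sub>L (id_blinfun - R) = id_blinfun" using s1 by simp
  have "(id_blinfun - R) o\<^sub>L Q = Q - (R o\<^sub>L Q)"
    by (rule blinfun_eqI) (simp add: ops)
  then have e2: "(id_blinfun - R) o\<^sub>L Q = id_blinfun" using s2 by simp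
  show ?thesis using sm e1 e2 unfolding Q_def by simp
qed




lemma inv_exists:
  fixes S Ss :: "'h::{real_inner,complete_space} \<Rightarrow>\<^sub>L 'h"
  assumes adj: "is_adjoint S Ss"
  shows "\<exists>P. (\<forall>x. blinfun_apply P x + blinfun_apply Ss (blinfun_apply S (blinfun_apply P x)) = x) \<and>
             (\<forall>x. blinfun_apply P (x + blinfun_apply Ss (blinfun_apply S x)) = x) \<and>
             (rstar B \<longrightarrow> S \<in> B \<longrightarrow> Ss \<in> B \<longrightarrow> S o\<^sub>L P \<in> B)"
proof -
  define c where "c = 1 + (norm S)^2"
  have c1: "c \<ge> 1" unfolding c_def by simp
  define M where "M = Ss o\<^sub>L S"
  define R where "R = id_blinfun - (1/c) *\<^sub>R (id_blinfun + M)"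
  have adjM: "is_adjoint M M" unfolding M_def by (rule adj_comp[OF adj_sym[OF adj] adj])
  have adjR: "is_adjoint R R" unfolding R_def
    by (intro adj_diff adj_id adj_scale adj_add adjM)
  have Mx: "inner (blinfun_apply M x) x = (norm (blinfun_apply S x))^2" for x
    using adj unfolding M_def is_adjoint_def by (simp add: power2_norm_eq_inner inner_commute)
  have Rx: "inner (blinfun_apply R x) x = (norm x)^2 - ((norm x)^2 + (norm (blinfun_apply S x))^2) / c" for x
    unfolding R_def using Mx[of x] by (simp add: ops inner_diff_left inner_add_left power2_norm_eq_inner divide_inverse algebra_simps)
  have Sx: "(norm (blinfun_apply S x))^2 \<le> (c - 1) * (norm x)^2" for x
  proof -
    have "norm (blinfun_apply S x) \<le> norm S * norm x" by (rule norm_blinfun)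
    then have "(norm (blinfun_apply S x))^2 \<le> (norm S * norm x)^2" by (rule power_mono) simp
    then show ?thesis unfolding c_def by (simp add: power_mult_distrib)
  qed
  have Rpos: "inner (blinfun_apply R x) x \<ge> 0" for x
  proof -
    have "((norm x)^2 + (norm (blinfun_apply S x))^2) / c \<le> (c * (norm x)^2) / c"
      using Sx[of x] c1 by (intro divide_right_mono) (auto simp: algebra_simps)
    then show ?thesis unfolding Rx using c1 by simp
  qed
  have Rup: "inner (blinfun_apply R x) x \<le> (1 - 1/c) * (norm x)^2" for x
  proof -
    have "(norm x)^2 / c \<le> ((norm x)^2 + (norm (blinfun_apply S x))^2) / c"
      using c1 by (intro divide_right_mono) auto
    then show ?thesis unfolding Rx by (simp add: algebra_simps)
  qed
  have nR: "norm R \<le> 1 - 1/c"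
    by (rule pos_norm_bound[OF adjR Rpos Rup]) (use c1 in simp)
  have nR1: "norm R < 1" using nR c1 by (smt (verit) divide_pos_pos)
  obtain sm: "summable (pw R)" and q1: "suminf (pw R) o\<^sub>L (id_blinfun - R) = id_blinfun"
    and q2: "(id_blinfun - R) o\<^sub>L suminf (pw R) = id_blinfun"
    using neumann[OF nR1] by blast
  define Q where "Q = suminf (pw R)"
  define P where "P = (1/c) *\<^sub>R Q"
  have idR: "id_blinfun - R = (1/c) *\<^sub>R (id_blinfun + M)" unfolding R_def by simp
  have p1: "(id_blinfun + M) o\<^sub>L P = id_blinfun"
  proof -
    have "(id_blinfun + M) o\<^sub>L P = (id_blinfun - R) o\<^sub>L Q"
      unfolding P_def idR using c1 by (intro blinfun_eqI) (simp add: ops scaleR_add_right)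
    then show ?thesis using q2 unfolding Q_def by simp
  qed
  have p2: "P o\<^sub>L (id_blinfun + M) = id_blinfun"
  proof -
    have "P o\<^sub>L (id_blinfun + M) = Q o\<^sub>L (id_blinfun - R)"
      unfolding P_def idR using c1 by (intro blinfun_eqI) (simp add: ops)
    then show ?thesis using q1 unfolding Q_def by simp
  qed
  have P1: "blinfun_apply P x + blinfun_apply Ss (blinfun_apply S (blinfun_apply P x)) = x" for x
    using arg_cong[OF p1, of "\<lambda>T. blinfun_apply T x"] unfolding M_def by (simp add: ops)
  have P2: "blinfun_apply P (x + blinfun_apply Ss (blinfun_apply S x)) = x" for x
    using arg_cong[OF p2, of "\<lambda>T. blinfun_apply T x"] unfolding M_def by (simp add: ops)
  have P3: "S o\<^sub>L P \<in> B" if B: "rstar B" and SB: "S \<in> B" and SsB: "Ss \<in> B"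
  proof -
    have B0: "0 \<in> B" and Badd: "\<And>S T. S \<in> B \<Longrightarrow> T \<in> B \<Longrightarrow> S + T \<in> B"
      and Bsc: "\<And>r T. T \<in> B \<Longrightarrow> r *\<^sub>R T \<in> B"
      and Bc: "\<And>S T. S \<in> B \<Longrightarrow> T \<in> B \<Longrightarrow> S o\<^sub>L T \<in> B" and Bcl: "closed B"
      using B unfolding rstar_def by auto
    have YR: "Y o\<^sub>L R \<in> B" if "Y \<in> B" for Y
    proof -
      have "Y o\<^sub>L R = Y + (- (1/c)) *\<^sub>R (Y + ((Y o\<^sub>L Ss) o\<^sub>L S))"
        unfolding R_def M_def by (intro blinfun_eqI) (simp add: ops algebra_simps)
      also have "\<dots> \<in> B" using that SB SsB by (intro Badd Bsc Bc)
      finally show ?thesis .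
    qed
    have pk: "S o\<^sub>L pw R k \<in> B" for k
    proof (induction k)
      case 0
      have "S o\<^sub>L pw R 0 = S" by (intro blinfun_eqI) simp
      then show ?case using SB by simp
    next
      case (Suc k)
      have "S o\<^sub>L pw R (Suc k) = (S o\<^sub>L pw R k) o\<^sub>L R" by (intro blinfun_eqI) simp
      then show ?case using YR[OF Suc] by simp
    qed
    have ps: "(\<Sum>i<n. S o\<^sub>L pw R i) \<in> B" for n
      by (induction n) (simp_all add: B0 Badd pk)
    have "S o\<^sub>L Q = (\<Sum>k. S o\<^sub>L pw R k)" unfolding Q_def by (rule bounded_linear.suminf[OF bl_compR sm])
    moreover have "summable (\<lambda>k. S o\<^sub>L pw R k)"
      by (rule bounded_linear.summable[OF bl_compR sm])
    ultimately have "(\<lambda>n. \<Sum>i<n. S o\<^sub>L pw R i) \<longlonglongrightarrow> (S o\<^sub>L Q)"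
      by (simp add: summable_LIMSEQ)
    then have "S o\<^sub>L Q \<in> B" by (rule closed_sequentially[OF Bcl, rotated]) (rule ps)
    moreover have "S o\<^sub>L P = (1/c) *\<^sub>R (S o\<^sub>L Q)" unfolding P_def by (intro blinfun_eqI) (simp add: ops)
    ultimately show ?thesis using Bsc by simp
  qed
  show ?thesis using P1 P2 P3 by blast
qed




lemma inv_props:
  fixes S Ss P :: "'h::{real_inner,complete_space} \<Rightarrow>\<^sub>L 'h"
  assumes adj: "is_adjoint S Ss"
    and P1: "\<And>x. blinfun_apply P x + blinfun_apply Ss (blinfun_apply S (blinfun_apply P x)) = x"
  shows "norm (blinfun_apply P x) \<le> norm x"
    and "2 * norm (blinfun_apply S (blinfun_apply P x)) \<le> norm x"
    and "norm (blinfun_apply S (blinfun_apply P (blinfun_apply Ss y))) \<le> norm y"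
proof -
  have ai: "inner u (blinfun_apply Ss (blinfun_apply S u)) = (norm (blinfun_apply S u))^2" for u
    using adj unfolding is_adjoint_def by (simp add: power2_norm_eq_inner inner_commute)
  define u where "u = blinfun_apply P x"
  have xu: "x = u + blinfun_apply Ss (blinfun_apply S u)" using P1[of x] unfolding u_def by simp
  have "inner x u = inner u u + inner u (blinfun_apply Ss (blinfun_apply S u))"
    unfolding xu by (simp add: inner_add_left inner_add_right inner_commute)
  then have ixu: "inner x u = (norm u)^2 + (norm (blinfun_apply S u))^2"
    using ai[of u] by (simp add: power2_norm_eq_inner)
  have "(norm u)^2 \<le> inner x u" unfolding ixu by simp
  also have "\<dots> \<le> norm x * norm u" by (rule norm_cauchy_schwarz)
  finally have "(norm u)^2 \<le> norm x * norm u" .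
  then show "norm (blinfun_apply P x) \<le> norm x" unfolding u_def[symmetric]
    by (cases "norm u = 0") (auto simp: power2_eq_square mult_le_cancel_right)
  define w where "w = blinfun_apply Ss (blinfun_apply S u)"
  have "(norm (blinfun_apply S u))^2 = inner u w" unfolding w_def by (rule ai[symmetric])
  also have "\<dots> \<le> norm u * norm w" by (rule norm_cauchy_schwarz)
  finally have sw: "(norm (blinfun_apply S u))^2 \<le> norm u * norm w" .
  have "(norm x)^2 = (norm u)^2 + 2 * inner u w + (norm w)^2"
    unfolding xu w_def[symmetric] by (simp add: power2_norm_eq_inner inner_add_left inner_add_right inner_commute)
  also have "\<dots> = (norm u)^2 + 2 * (norm (blinfun_apply S u))^2 + (norm w)^2"
    unfolding w_def ai by simp
  also have "\<dots> \<ge> 4 * (norm (blinfun_apply S u))^2"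
  proof -
    have "2 * (norm u * norm w) \<le> (norm u)^2 + (norm w)^2"
      using sum_squares_bound[of "norm u" "norm w"] by simp
    then show ?thesis using sw by simp
  qed
  finally have "(2 * norm (blinfun_apply S u))^2 \<le> (norm x)^2" by (simp add: power_mult_distrib)
  then show "2 * norm (blinfun_apply S (blinfun_apply P x)) \<le> norm x"
    unfolding u_def[symmetric] by (rule power2_le_imp_le) simp
  define v where "v = blinfun_apply P (blinfun_apply Ss y)"
  have yv: "blinfun_apply Ss y = v + blinfun_apply Ss (blinfun_apply S v)" using P1[of "blinfun_apply Ss y"] unfolding v_def by simp
  have "inner (blinfun_apply Ss y) v = inner v v + inner v (blinfun_apply Ss (blinfun_apply S v))"
    unfolding yv by (simp add: inner_add_left inner_add_right inner_commute)
  then have "inner (blinfun_apply Ss y) v = (norm v)^2 + (norm (blinfun_apply S v))^2"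
    using ai[of v] by (simp add: power2_norm_eq_inner)
  moreover have "inner (blinfun_apply Ss y) v = inner (blinfun_apply S v) y"
    using adj unfolding is_adjoint_def by (simp add: inner_commute)
  moreover have "inner (blinfun_apply S v) y \<le> norm (blinfun_apply S v) * norm y" by (rule norm_cauchy_schwarz)
  ultimately have "(norm (blinfun_apply S v))^2 \<le> norm (blinfun_apply S v) * norm y"
    by (smt (verit) zero_le_power2)
  then show "norm (blinfun_apply S (blinfun_apply P (blinfun_apply Ss y))) \<le> norm y" unfolding v_def[symmetric]
    by (cases "norm (blinfun_apply S v) = 0") (auto simp: power2_eq_square mult_le_cancel_left)
qed

lemma est:
  fixes S Ss PS Z Zs PZ :: "'h::{real_inner,complete_space} \<Rightarrow>\<^sub>L 'h"
  assumes adjS: "is_adjoint S Ss"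
    and PS1: "\<And>x. blinfun_apply PS x + blinfun_apply Ss (blinfun_apply S (blinfun_apply PS x)) = x"
    and PS2: "\<And>x. blinfun_apply PS (x + blinfun_apply Ss (blinfun_apply S x)) = x"
    and PZ1: "\<And>x. blinfun_apply PZ x + blinfun_apply Zs (blinfun_apply Z (blinfun_apply PZ x)) = x"
  shows "norm (2 *\<^sub>R blinfun_apply S (blinfun_apply PS x) - 2 *\<^sub>R blinfun_apply Z (blinfun_apply PZ x))
     \<le> 4 * norm (blinfun_apply (S - Z) (blinfun_apply PZ x))
       + norm (blinfun_apply (Zs - Ss) (blinfun_apply Z (blinfun_apply PZ x)))"
proof -
  define u where "u = blinfun_apply PZ x"
  define a where "a = blinfun_apply (Zs - Ss) (blinfun_apply Z u)"
  define b where "b = blinfun_apply (Z - S) u"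
  have xu: "x = (u + blinfun_apply Ss (blinfun_apply S u)) + (a + blinfun_apply Ss b)"
    using PZ1[of x] unfolding u_def[symmetric] a_def b_def by (simp add: ops algebra_simps)
  have "blinfun_apply PS x = u + blinfun_apply PS a + blinfun_apply PS (blinfun_apply Ss b)"
    by (subst xu, subst blinfun.add_right, subst PS2) (simp add: blinfun.add_right)
  then have "blinfun_apply S (blinfun_apply PS x) =
      blinfun_apply S u + blinfun_apply S (blinfun_apply PS a) + blinfun_apply S (blinfun_apply PS (blinfun_apply Ss b))"
    by (simp add: blinfun.add_right)
  then have eq: "blinfun_apply S (blinfun_apply PS x) - blinfun_apply Z u =
      (- b) + blinfun_apply S (blinfun_apply PS a) + blinfun_apply S (blinfun_apply PS (blinfun_apply Ss b))"
    unfolding b_def by (simp add: ops algebra_simps)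
  have n1: "2 * norm (blinfun_apply S (blinfun_apply PS a)) \<le> norm a" by (rule inv_props(2)[OF adjS PS1])
  have n2: "norm (blinfun_apply S (blinfun_apply PS (blinfun_apply Ss b))) \<le> norm b" by (rule inv_props(3)[OF adjS PS1])
  have "norm (blinfun_apply S (blinfun_apply PS x) - blinfun_apply Z u) \<le>
      norm b + norm (blinfun_apply S (blinfun_apply PS a)) + norm (blinfun_apply S (blinfun_apply PS (blinfun_apply Ss b)))"
    unfolding eq by (metis norm_minus_cancel norm_triangle_le order_refl add_mono)
  then have "norm (blinfun_apply S (blinfun_apply PS x) - blinfun_apply Z u) \<le> 2 * norm b + norm a / 2"
    using n1 n2 by linarith
  moreover have "norm b = norm (blinfun_apply (S - Z) u)" unfolding b_def
    by (metis blinfun.minus_left minus_diff_eq norm_minus_cancel)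
  moreover have "2 *\<^sub>R blinfun_apply S (blinfun_apply PS x) - 2 *\<^sub>R blinfun_apply Z u =
      2 *\<^sub>R (blinfun_apply S (blinfun_apply PS x) - blinfun_apply Z u)" by (simp add: scaleR_diff_right)
  ultimately show ?thesis unfolding u_def[symmetric] a_def[symmetric] by simp
qed




primrec itr :: "('h::real_normed_vector \<Rightarrow>\<^sub>L 'h) \<Rightarrow> ('h \<Rightarrow>\<^sub>L 'h) \<Rightarrow> nat \<Rightarrow> ('h \<Rightarrow>\<^sub>L 'h) \<times> ('h \<Rightarrow>\<^sub>L 'h)" where
  "itr X Xs 0 = (0, 0)"
| "itr X Xs (Suc n) = ((1/2) *\<^sub>R (X + (X o\<^sub>L (snd (itr X Xs n) o\<^sub>L fst (itr X Xs n)))),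
                       (1/2) *\<^sub>R (Xs + ((snd (itr X Xs n) o\<^sub>L fst (itr X Xs n)) o\<^sub>L Xs)))"

lemma geo_conv:
  fixes f :: "nat \<Rightarrow> ('h::{real_normed_vector,complete_space} \<Rightarrow>\<^sub>L 'h)"
  assumes d: "\<And>n. norm (f (Suc n) - f n) \<le> q^n" and q: "0 \<le> q" "q < 1"
  shows "\<exists>L. f \<longlonglongrightarrow> L"
proof -
  define g where "g n = f (Suc n) - f n" for n
  have sg: "summable g"
  proof (rule bl_summable)
    show "summable (\<lambda>n. norm (g n))"
      by (rule summable_comparison_test'[of "\<lambda>n. q^n" 0]) (use q d in \<open>auto simp: g_def\<close>)
  qed
  have "(\<lambda>n. \<Sum>i<n. g i) \<longlonglongrightarrow> suminf g" by (rule summable_LIMSEQ[OF sg])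
  moreover have "(\<Sum>i<n. g i) = f n - f 0" for n unfolding g_def by (rule sum_lessThan_telescope)
  ultimately have "(\<lambda>n. f n - f 0) \<longlonglongrightarrow> suminf g" by simp
  then have "(\<lambda>n. (f n - f 0) + f 0) \<longlonglongrightarrow> suminf g + f 0" by (intro tendsto_add tendsto_const)
  then show ?thesis by auto
qed

lemma comp_tendsto:
  fixes A B :: "nat \<Rightarrow> ('h::real_normed_vector \<Rightarrow>\<^sub>L 'h)"
  shows "A \<longlonglongrightarrow> A0 \<Longrightarrow> B \<longlonglongrightarrow> B0 \<Longrightarrow> (\<lambda>n. A n o\<^sub>L B n) \<longlonglongrightarrow> (A0 o\<^sub>L B0)"
  by (rule bounded_bilinear.tendsto[OF bounded_bilinear_blinfun_compose])

lemma fixpt: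
  fixes X Xs :: "'h::{real_inner,complete_space} \<Rightarrow>\<^sub>L 'h"
  assumes B: "rstar B" and X: "X \<in> wcl B" and adjX: "is_adjoint X Xs" and nX: "norm X \<le> q" and q: "q < 1"
  shows "\<exists>Z Zs. Z \<in> wcl B \<and> is_adjoint Z Zs \<and> 2 *\<^sub>R Z = X + (X o\<^sub>L (Zs o\<^sub>L Z))"
proof -
  define zz where "zz n = fst (itr X Xs n)" for n
  define zs where "zs n = snd (itr X Xs n)" for n
  have zz_S: "zz (Suc n) = (1/2) *\<^sub>R (X + (X o\<^sub>L (zs n o\<^sub>L zz n)))" for n unfolding zz_def zs_def by simp
  have zs_S: "zs (Suc n) = (1/2) *\<^sub>R (Xs + ((zs n o\<^sub>L zz n) o\<^sub>L Xs))" for n unfolding zz_def zs_def by simp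
  have zz0: "zz 0 = 0" and zs0: "zs 0 = 0" unfolding zz_def zs_def by simp_all
  have q0: "q \<ge> 0" using nX norm_ge_zero order_trans by blast
  have adj: "is_adjoint (zz n) (zs n)" for n
  proof (induction n)
    case 0 then show ?case using adj_zero by (simp add: zz0 zs0)
  next
    case (Suc n)
    have a1: "is_adjoint (zs n o\<^sub>L zz n) (zs n o\<^sub>L zz n)" by (rule adj_comp[OF adj_sym[OF Suc] Suc])
    show ?case unfolding zz_S zs_S
      by (intro adj_scale adj_add adjX adj_comp[OF adjX a1])
  qed
  have wc: "zz n \<in> wcl B" for n
  proof (induction n)
    case 0
    have "0 \<in> B" using B unfolding rstar_def by blast
    then show ?case by (simp add: zz0 B_sub_wcl)
  next
    case (Suc n)
    have "zs n \<in> wcl B" by (rule wcl_adj[OF B Suc adj])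
    then show ?case unfolding zz_S using Suc X by (intro wcl_scale[OF B] wcl_add[OF B] wcl_comp[OF B])
  qed
  have nz: "norm (zz n) \<le> 1" for n
  proof (induction n)
    case 0 then show ?case by (simp add: zz0)
  next
    case (Suc n)
    have ns: "norm (zs n) \<le> 1" using adj_norm[OF adj[of n]] Suc by simp
    have "norm (zs n o\<^sub>L zz n) \<le> 1"
      using norm_blinfun_compose[of "zs n" "zz n"] ns Suc by (smt (verit) mult_le_one norm_ge_zero)
    then have "norm (X o\<^sub>L (zs n o\<^sub>L zz n)) \<le> q"
      using norm_blinfun_compose[of X "zs n o\<^sub>L zz n"] nX q0 by (smt (verit) mult_left_le norm_ge_zero mult_right_mono)
    then have "norm (X + (X o\<^sub>L (zs n o\<^sub>L zz n))) \<le> 2" using nX q norm_triangle_ineq[of X "X o\<^sub>L (zs n o\<^sub>L zz n)"] by linarith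
    then show ?case unfolding zz_S by simp
  qed
  have ns: "norm (zs n) \<le> 1" for n using adj_norm[OF adj[of n]] nz[of n] by simp
  have dz: "norm (zz (Suc n) - zz n) \<le> q^n" for n
  proof (induction n)
    case 0
    have "zz (Suc 0) - zz 0 = (1/2) *\<^sub>R X" by (intro blinfun_eqI) (simp add: zz_S zz0 zs0 ops)
    then have "norm (zz (Suc 0) - zz 0) = norm ((1/2) *\<^sub>R X)" by simp
    also have "\<dots> \<le> 1" using nX q by simp
    finally show ?case by simp
  next
    case (Suc n)
    define d where "d = zz (Suc n) - zz n"
    define ds where "ds = zs (Suc n) - zs n"
    have nds: "norm ds \<le> norm d" unfolding d_def ds_def by (rule adj_norm[OF adj_diff[OF adj adj]])
    have "zz (Suc (Suc n)) - zz (Suc n) = (1/2) *\<^sub>R (X o\<^sub>L ((zs (Suc n) o\<^sub>L d) + (ds o\<^sub>L zz n)))"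
      unfolding zz_S[of "Suc n"] zz_S[of n] d_def ds_def by (intro blinfun_eqI) (simp add: ops algebra_simps)
    then have "norm (zz (Suc (Suc n)) - zz (Suc n)) \<le> (1/2) * (norm X * (norm (zs (Suc n)) * norm d + norm ds * norm (zz n)))"
    proof -
      assume e: "zz (Suc (Suc n)) - zz (Suc n) = (1/2) *\<^sub>R (X o\<^sub>L ((zs (Suc n) o\<^sub>L d) + (ds o\<^sub>L zz n)))"
      have "norm ((zs (Suc n) o\<^sub>L d) + (ds o\<^sub>L zz n)) \<le> norm (zs (Suc n)) * norm d + norm ds * norm (zz n)"
        by (rule order_trans[OF norm_triangle_ineq add_mono[OF norm_blinfun_compose norm_blinfun_compose]])
      then have "norm (X o\<^sub>L ((zs (Suc n) o\<^sub>L d) + (ds o\<^sub>L zz n))) \<le> norm X * (norm (zs (Suc n)) * norm d + norm ds * norm (zz n))"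
        by (rule order_trans[OF norm_blinfun_compose mult_left_mono]) simp
      then show ?thesis unfolding e by simp
    qed
    also have "\<dots> \<le> (1/2) * (q * (1 * norm d + norm d * 1))"
      using nX ns[of "Suc n"] nz[of n] nds q0
      by (intro mult_left_mono mult_mono add_mono) auto
    also have "\<dots> = q * norm d" by simp
    also have "\<dots> \<le> q * q^n" using Suc q0 unfolding d_def by (intro mult_left_mono) auto
    finally show ?case by simp
  qed
  have dzs: "norm (zs (Suc n) - zs n) \<le> q^n" for n
    using adj_norm[OF adj_diff[OF adj adj], of "Suc n" n] dz[of n] by simp
  obtain Z where Zl: "zz \<longlonglongrightarrow> Z" using geo_conv[OF dz q0 q] by blast
  obtain Zs where Zsl: "zs \<longlonglongrightarrow> Zs" using geo_conv[OF dzs q0 q] by blast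
  have "Z \<in> wcl B" by (rule closed_sequentially[OF wcl_closed, rotated, OF Zl]) (rule wc)
  moreover have "is_adjoint Z Zs" by (rule adj_lim[OF adj Zl Zsl])
  moreover have "2 *\<^sub>R Z = X + (X o\<^sub>L (Zs o\<^sub>L Z))"
  proof -
    have "(\<lambda>n. zz (Suc n)) \<longlonglongrightarrow> Z" using Zl by (rule LIMSEQ_Suc)
    moreover have "(\<lambda>n. zz (Suc n)) \<longlonglongrightarrow> (1/2) *\<^sub>R (X + (X o\<^sub>L (Zs o\<^sub>L Z)))"
      unfolding zz_S by (intro tendsto_scaleR tendsto_const tendsto_add comp_tendsto Zl Zsl)
    ultimately have "Z = (1/2) *\<^sub>R (X + (X o\<^sub>L (Zs o\<^sub>L Z)))" by (rule LIMSEQ_unique)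
    then have h: "2 *\<^sub>R Z = 2 *\<^sub>R ((1/2) *\<^sub>R (X + (X o\<^sub>L (Zs o\<^sub>L Z))))" by (rule arg_cong)
    show ?thesis using h by (simp only: scaleR_scaleR) simp
  qed
  ultimately show ?thesis by blast
qed




lemma kaplansky:
  fixes X :: "'h::{real_inner,complete_space} \<Rightarrow>\<^sub>L 'h"
  assumes B: "rstar B" and X: "X \<in> wcl B" and nX: "norm X \<le> 1" and V: "finite V" and e: "e > 0"
  shows "\<exists>Y\<in>B. norm Y \<le> 1 \<and> (\<forall>x\<in>V. norm (blinfun_apply (X - Y) x) < e)"
proof -
  obtain Xs where adjX: "is_adjoint X Xs" using adj_exists by blast
  define K where "K = (\<Sum>x\<in>V. norm x) + 1"
  have K: "K > 0" unfolding K_def by (simp add: add_nonneg_pos sum_nonneg)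
  have Kx: "norm x \<le> K" if "x \<in> V" for x
  proof -
    have "norm x \<le> (\<Sum>x\<in>V. norm x)" using member_le_sum[OF that, of norm] V by simp
    then show ?thesis unfolding K_def by simp
  qed
  define \<delta> where "\<delta> = min (1/2) (e / (4 * K))"
  have d0: "\<delta> > 0" and d1: "\<delta> \<le> 1/2" and d2: "\<delta> \<le> e / (4 * K)"
    unfolding \<delta>_def using e K by auto
  define X' where "X' = (1 - \<delta>) *\<^sub>R X"
  define Xs' where "Xs' = (1 - \<delta>) *\<^sub>R Xs"
  have X'w: "X' \<in> wcl B" unfolding X'_def by (rule wcl_scale[OF B X])
  have adjX': "is_adjoint X' Xs'" unfolding X'_def Xs'_def by (rule adj_scale[OF adjX])
  have nX': "norm X' \<le> 1 - \<delta>" unfolding X'_def using nX d1 by (simp add: mult_left_le)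
  obtain Z Zs where Zw: "Z \<in> wcl B" and adjZ: "is_adjoint Z Zs"
    and Zeq: "2 *\<^sub>R Z = X' + (X' o\<^sub>L (Zs o\<^sub>L Z))"
    using fixpt[OF B X'w adjX' nX'] d0 by auto
  obtain PZ where PZ1: "\<And>x. blinfun_apply PZ x + blinfun_apply Zs (blinfun_apply Z (blinfun_apply PZ x)) = x"
    using inv_exists[OF adjZ, of B] by blast
  have X'x: "blinfun_apply X' x = 2 *\<^sub>R blinfun_apply Z (blinfun_apply PZ x)" for x
  proof -
    have "2 *\<^sub>R blinfun_apply Z (blinfun_apply PZ x) = blinfun_apply (2 *\<^sub>R Z) (blinfun_apply PZ x)"
      by (simp add: ops)
    also have "\<dots> = blinfun_apply X' (blinfun_apply PZ x + blinfun_apply Zs (blinfun_apply Z (blinfun_apply PZ x)))"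
      unfolding Zeq by (simp add: ops)
    also have "\<dots> = blinfun_apply X' x" using PZ1 by simp
    finally show ?thesis by simp
  qed
  define e' where "e' = e / 10"
  have e': "e' > 0" unfolding e'_def using e by simp
  obtain S Ss where SB: "S \<in> B" and SsB: "Ss \<in> B" and adjS: "is_adjoint S Ss"
    and aS: "\<forall>x\<in>(\<lambda>x. blinfun_apply PZ x) ` V. norm (blinfun_apply (Z - S) x) < e'"
    and aSs: "\<forall>y\<in>(\<lambda>x. blinfun_apply Z (blinfun_apply PZ x)) ` V. norm (blinfun_apply (Zs - Ss) y) < e'"
    using sot_approx[OF B Zw adjZ _ _ e', of "(\<lambda>x. blinfun_apply PZ x) ` V" "(\<lambda>x. blinfun_apply Z (blinfun_apply PZ x)) ` V"] V
    by blast
  obtain PS where PS1: "\<And>x. blinfun_apply PS x + blinfun_apply Ss (blinfun_apply S (blinfun_apply PS x)) = x"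
    and PS2: "\<And>x. blinfun_apply PS (x + blinfun_apply Ss (blinfun_apply S x)) = x"
    and PSB: "S o\<^sub>L PS \<in> B"
    using inv_exists[OF adjS, of B] B SB SsB by blast
  define Y where "Y = 2 *\<^sub>R (S o\<^sub>L PS)"
  have YB: "Y \<in> B" unfolding Y_def using B PSB unfolding rstar_def by blast
  have nY: "norm Y \<le> 1"
  proof (rule norm_blinfun_bound[of 1, simplified])
    fix x
    show "norm (blinfun_apply Y x) \<le> norm x"
      using inv_props(2)[OF adjS PS1, of x] unfolding Y_def by (simp add: ops)
  qed
  have "\<forall>x\<in>V. norm (blinfun_apply (X - Y) x) < e"
  proof
    fix x assume x: "x \<in> V"
    have "blinfun_apply (X - Y) x = (blinfun_apply X x - blinfun_apply X' x)
        - (2 *\<^sub>R blinfun_apply S (blinfun_apply PS x) - blinfun_apply X' x)"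
      unfolding Y_def by (simp add: minus_blinfun.rep_eq scaleR_blinfun.rep_eq)
    then have "blinfun_apply (X - Y) x = (blinfun_apply X x - blinfun_apply X' x)
        - (2 *\<^sub>R blinfun_apply S (blinfun_apply PS x) - 2 *\<^sub>R blinfun_apply Z (blinfun_apply PZ x))"
      by (simp only: X'x)
    then have "norm (blinfun_apply (X - Y) x) \<le> norm (blinfun_apply X x - blinfun_apply X' x)
        + norm (2 *\<^sub>R blinfun_apply S (blinfun_apply PS x) - 2 *\<^sub>R blinfun_apply Z (blinfun_apply PZ x))"
      by (simp only: norm_triangle_ineq4)
    also have "\<dots> < e/2 + e/2"
    proof (rule add_less_le_mono)
      have "blinfun_apply X x - blinfun_apply X' x = \<delta> *\<^sub>R blinfun_apply X x"
        unfolding X'_def by (simp add: scaleR_blinfun.rep_eq minus_blinfun.rep_eq scaleR_diff_left)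
      then have "norm (blinfun_apply X x - blinfun_apply X' x) = \<delta> * norm (blinfun_apply X x)"
        using d0 by simp
      also have "\<dots> \<le> \<delta> * norm x"
      proof (rule mult_left_mono)
        have "norm (blinfun_apply X x) \<le> norm X * norm x" by (rule norm_blinfun)
        also have "\<dots> \<le> 1 * norm x" using nX by (intro mult_right_mono) auto
        finally show "norm (blinfun_apply X x) \<le> norm x" by simp
      qed (use d0 in simp)
      also have "\<dots> \<le> (e / (4 * K)) * K" using d2 Kx[OF x] d0 by (intro mult_mono) auto
      also have "\<dots> < e/2" using K e by simp
      finally show "norm (blinfun_apply X x - blinfun_apply X' x) < e/2" .
      have "norm (2 *\<^sub>R blinfun_apply S (blinfun_apply PS x) - 2 *\<^sub>R blinfun_apply Z (blinfun_apply PZ x))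
         \<le> 4 * norm (blinfun_apply (S - Z) (blinfun_apply PZ x))
           + norm (blinfun_apply (Zs - Ss) (blinfun_apply Z (blinfun_apply PZ x)))"
        by (rule est[OF adjS PS1 PS2 PZ1])
      also have "\<dots> \<le> 4 * e' + e'"
      proof (rule add_mono)
        have "norm (blinfun_apply (S - Z) (blinfun_apply PZ x)) = norm (blinfun_apply (Z - S) (blinfun_apply PZ x))"
          by (simp add: blinfun.diff_left norm_minus_commute)
        also have "\<dots> < e'" using aS x by blast
        finally show "4 * norm (blinfun_apply (S - Z) (blinfun_apply PZ x)) \<le> 4 * e'" by simp
        show "norm (blinfun_apply (Zs - Ss) (blinfun_apply Z (blinfun_apply PZ x))) \<le> e'"
          using aSs x by (simp add: less_imp_le)
      qed
      also have "\<dots> = e/2" unfolding e'_def by simp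
      finally show "norm (2 *\<^sub>R blinfun_apply S (blinfun_apply PS x) - 2 *\<^sub>R blinfun_apply Z (blinfun_apply PZ x)) \<le> e/2" .
    qed
    finally show "norm (blinfun_apply (X - Y) x) < e" by simp
  qed
  then show ?thesis using YB nY by blast
qed




lemma span_closed_of_lb:
  fixes G :: "'a::real_normed_vector set"
  assumes G: "finite G" and C: "C \<ge> 0" and lb: "\<And>u. (\<Sum>g\<in>G. \<bar>u g\<bar>) \<le> C * norm (\<Sum>g\<in>G. u g *\<^sub>R g)"
  shows "closed (span G)"
proof (rule closed_sequential_limits[THEN iffD2], intro allI impI, elim conjE)
  fix w and l assume ws: "\<forall>n. w n \<in> span G" and wl: "w \<longlonglongrightarrow> l"
  have "\<forall>n. \<exists>u. w n = (\<Sum>g\<in>G. u g *\<^sub>R g)" using ws span_finite[OF G] by auto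
  then obtain u where u: "\<And>n. w n = (\<Sum>g\<in>G. u n g *\<^sub>R g)" by metis
  have cu: "convergent (\<lambda>n. u n g)" if g: "g \<in> G" for g
  proof -
    have "Cauchy (\<lambda>n. u n g)"
    proof (rule metric_CauchyI)
      fix e :: real assume e: "e > 0"
      have "Cauchy w" using wl by (rule LIMSEQ_imp_Cauchy)
      moreover have "e / (C + 1) > 0" using e C by simp
      ultimately obtain M where M: "\<forall>m\<ge>M. \<forall>n\<ge>M. dist (w m) (w n) < e / (C + 1)"
        using metric_CauchyD by blast
      have "dist (u m g) (u n g) < e" if "m \<ge> M" "n \<ge> M" for m n
      proof -
        have "\<bar>u m g - u n g\<bar> \<le> (\<Sum>g\<in>G. \<bar>u m g - u n g\<bar>)"
          using member_le_sum[OF g, of "\<lambda>g. \<bar>u m g - u n g\<bar>"] G by simp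
        also have "\<dots> \<le> C * norm (\<Sum>g\<in>G. (u m g - u n g) *\<^sub>R g)" by (rule lb)
        also have "(\<Sum>g\<in>G. (u m g - u n g) *\<^sub>R g) = w m - w n"
          unfolding u by (simp add: scaleR_diff_left sum_subtractf)
        also have "C * norm (w m - w n) \<le> C * (e / (C + 1))"
          using M that C by (intro mult_left_mono) (auto simp: dist_norm less_imp_le)
        also have "\<dots> < e" using e C by (simp add: field_simps)
        finally show ?thesis by (simp add: dist_real_def)
      qed
      then show "\<exists>M. \<forall>m\<ge>M. \<forall>n\<ge>M. dist (u m g) (u n g) < e" by blast
    qed
    then show ?thesis by (simp add: Cauchy_convergent_iff)
  qed
  define v where "v g = lim (\<lambda>n. u n g)" for g
  have vl: "(\<lambda>n. u n g) \<longlonglongrightarrow> v g" if "g \<in> G" for g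
    unfolding v_def using cu[OF that] by (simp add: convergent_LIMSEQ_iff)
  have "w \<longlonglongrightarrow> (\<Sum>g\<in>G. v g *\<^sub>R g)"
    unfolding u by (intro tendsto_sum tendsto_scaleR vl tendsto_const)
  then have "l = (\<Sum>g\<in>G. v g *\<^sub>R g)" using wl LIMSEQ_unique by blast
  then show "l \<in> span G" by (simp add: span_sum span_scale span_base)
qed

lemma indep_lb:
  fixes G :: "'a::real_normed_vector set"
  assumes G: "finite G" and ind: "independent G"
  shows "\<exists>C\<ge>0. \<forall>u. (\<Sum>g\<in>G. \<bar>u g\<bar>) \<le> C * norm (\<Sum>g\<in>G. u g *\<^sub>R g)"
  using G ind
proof (induction G rule: finite_induct)
  case empty then show ?case by auto
next
  case (insert h G)
  have indG: "independent G" and hG: "h \<notin> span G"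
    using insert.prems insert.hyps(2) by (auto simp: independent_insert)
  obtain C where C: "C \<ge> 0" "\<And>u. (\<Sum>g\<in>G. \<bar>u g\<bar>) \<le> C * norm (\<Sum>g\<in>G. u g *\<^sub>R g)"
    using insert.IH[OF indG] by blast
  have cl: "closed (span G)" by (rule span_closed_of_lb[OF insert.hyps(1) C])
  have ne: "span G \<noteq> {}" using span_zero by blast
  define D where "D = infdist h (span G)"
  have D: "D > 0" using hG in_closed_iff_infdist_zero[OF cl ne, of h] infdist_nonneg[of h "span G"]
    unfolding D_def by linarith
  define C' where "C' = (1 + C * norm h) / D + C"
  have C'0: "C' \<ge> 0" unfolding C'_def using C D by simp
  have "(\<Sum>g\<in>insert h G. \<bar>u g\<bar>) \<le> C' * norm (\<Sum>g\<in>insert h G. u g *\<^sub>R g)" for u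
  proof -
    define w where "w = (\<Sum>g\<in>G. u g *\<^sub>R g)"
    define v where "v = (\<Sum>g\<in>insert h G. u g *\<^sub>R g)"
    have vw: "v = u h *\<^sub>R h + w" unfolding v_def w_def using insert.hyps by simp
    have wspan: "w \<in> span G" unfolding w_def by (simp add: span_sum span_scale span_base)
    have nv: "\<bar>u h\<bar> * D \<le> norm v"
    proof (cases "u h = 0")
      case True then show ?thesis by simp
    next
      case False
      have m: "- ((1 / u h) *\<^sub>R w) \<in> span G" using wspan by (simp add: span_neg span_scale)
      have "D \<le> dist h (- ((1 / u h) *\<^sub>R w))" unfolding D_def by (rule infdist_le[OF m])
      also have "\<dots> = norm (h + (1 / u h) *\<^sub>R w)" by (simp add: dist_norm)
      finally have "\<bar>u h\<bar> * D \<le> \<bar>u h\<bar> * norm (h + (1 / u h) *\<^sub>R w)" by (simp add: mult_left_mono)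
      also have "\<dots> = norm (u h *\<^sub>R (h + (1 / u h) *\<^sub>R w))" by simp
      also have "u h *\<^sub>R (h + (1 / u h) *\<^sub>R w) = v" unfolding vw using False by (simp add: scaleR_add_right)
      finally show ?thesis .
    qed
    have uh: "\<bar>u h\<bar> \<le> norm v / D" using nv D by (simp add: pos_le_divide_eq)
    have nw: "norm w \<le> norm v + \<bar>u h\<bar> * norm h"
    proof -
      have "w = v - u h *\<^sub>R h" unfolding vw by simp
      then have "norm w \<le> norm v + norm (u h *\<^sub>R h)" by (metis norm_triangle_ineq4)
      then show ?thesis by simp
    qed
    have "(\<Sum>g\<in>insert h G. \<bar>u g\<bar>) = \<bar>u h\<bar> + (\<Sum>g\<in>G. \<bar>u g\<bar>)" using insert.hyps by simp
    also have "\<dots> \<le> \<bar>u h\<bar> + C * norm w" using C(2)[of u] unfolding w_def by simp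
    also have "\<dots> \<le> \<bar>u h\<bar> + C * (norm v + \<bar>u h\<bar> * norm h)" using nw C(1) by (simp add: mult_left_mono)
    also have "\<dots> = \<bar>u h\<bar> * (1 + C * norm h) + C * norm v" by (simp add: algebra_simps)
    also have "\<dots> \<le> (norm v / D) * (1 + C * norm h) + C * norm v"
      using uh C(1) by (intro add_mono mult_right_mono) auto
    also have "\<dots> = C' * norm v" unfolding C'_def by (simp add: algebra_simps add_divide_distrib)
    finally show ?thesis unfolding v_def .
  qed
  then show ?case using C'0 by blast
qed




lemma tb:
  fixes G :: "'a::real_normed_vector set"
  assumes G: "finite G" and r: "r > 0"
  shows "\<exists>N. finite N \<and> (\<forall>v\<in>span G. norm v \<le> R \<longrightarrow> (\<exists>n\<in>N. norm (v - n) \<le> r))"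
proof -
  obtain G' where G'G: "G' \<subseteq> G" and ind: "independent G'" and Gs: "G \<subseteq> span G'"
    by (rule maximal_independent_subset)
  have G': "finite G'" using G G'G finite_subset by blast
  have sp: "span G \<subseteq> span G'" using Gs span_mono span_span by (metis)
  obtain C where C: "C \<ge> 0" "\<And>u. (\<Sum>g\<in>G'. \<bar>u g\<bar>) \<le> C * norm (\<Sum>g\<in>G'. u g *\<^sub>R g)"
    using indep_lb[OF G' ind] by blast
  define \<sigma> where "\<sigma> = (\<Sum>g\<in>G'. norm g)"
  have \<sigma>0: "\<sigma> \<ge> 0" unfolding \<sigma>_def by (simp add: sum_nonneg)
  define \<delta> where "\<delta> = r / (\<sigma> + 1)"
  have \<delta>0: "\<delta> > 0" unfolding \<delta>_def using r \<sigma>0 by simp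
  define K :: int where "K = \<lceil>C * max R 0 / \<delta>\<rceil> + 1"
  define N where "N = (\<lambda>k. \<Sum>g\<in>G'. (\<delta> * real_of_int (k g)) *\<^sub>R g) ` (PiE G' (\<lambda>_. {-K..K}))"
  have fN: "finite N" unfolding N_def using G' by (intro finite_imageI finite_PiE) auto
  have "\<exists>n\<in>N. norm (v - n) \<le> r" if v: "v \<in> span G" "norm v \<le> R" for v
  proof -
    have "v \<in> span G'" using v sp by blast
    then obtain u where u: "v = (\<Sum>g\<in>G'. u g *\<^sub>R g)" using span_finite[OF G'] by auto
    have su: "(\<Sum>g\<in>G'. \<bar>u g\<bar>) \<le> C * max R 0"
      using C(2)[of u] u[symmetric] v(2) C(1) by (smt (verit) mult_left_mono)
    define k where "k = restrict (\<lambda>g. round (u g / \<delta>)) G'"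
    have kP: "k \<in> PiE G' (\<lambda>_. {-K..K})"
    proof -
      have "round (u g / \<delta>) \<in> {-K..K}" if g: "g \<in> G'" for g
      proof -
        have ug: "\<bar>u g\<bar> \<le> C * max R 0"
          using member_le_sum[OF g, of "\<lambda>g. \<bar>u g\<bar>"] G' su by simp
        have "\<bar>u g / \<delta>\<bar> \<le> C * max R 0 / \<delta>" using ug \<delta>0 by (simp add: divide_right_mono)
        also have "\<dots> \<le> of_int \<lceil>C * max R 0 / \<delta>\<rceil>" by (rule le_of_int_ceiling)
        finally have a: "\<bar>u g / \<delta>\<bar> \<le> of_int \<lceil>C * max R 0 / \<delta>\<rceil>" .
        have "of_int (round (u g / \<delta>)) \<le> u g / \<delta> + 1/2" by (rule of_int_round_le)
        moreover have "of_int (round (u g / \<delta>)) \<ge> u g / \<delta> - 1/2" by (rule of_int_round_ge)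
        moreover have "u g / \<delta> \<le> of_int \<lceil>C * max R 0 / \<delta>\<rceil>" "- of_int \<lceil>C * max R 0 / \<delta>\<rceil> \<le> u g / \<delta>"
          using a by (simp_all only: abs_le_iff) auto
        moreover have "real_of_int K = of_int \<lceil>C * max R 0 / \<delta>\<rceil> + 1" unfolding K_def by simp
        ultimately have "real_of_int (round (u g / \<delta>)) \<le> real_of_int K" "real_of_int (round (u g / \<delta>)) \<ge> - real_of_int K"
          by linarith+
        then show ?thesis by simp
      qed
      then show ?thesis unfolding k_def by auto
    qed
    define n where "n = (\<Sum>g\<in>G'. (\<delta> * real_of_int (k g)) *\<^sub>R g)"
    have nN: "n \<in> N" unfolding N_def n_def using kP by blast
    have "v - n = (\<Sum>g\<in>G'. (u g - \<delta> * real_of_int (round (u g / \<delta>))) *\<^sub>R g)"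
      unfolding u n_def k_def by (simp add: scaleR_diff_left sum_subtractf)
    then have "norm (v - n) \<le> (\<Sum>g\<in>G'. norm ((u g - \<delta> * real_of_int (round (u g / \<delta>))) *\<^sub>R g))"
      by (simp only: norm_sum)
    also have "\<dots> \<le> (\<Sum>g\<in>G'. (\<delta> / 2) * norm g)"
    proof (rule sum_mono)
      fix g assume "g \<in> G'"
      have "u g - \<delta> * real_of_int (round (u g / \<delta>)) = \<delta> * (u g / \<delta> - real_of_int (round (u g / \<delta>)))"
        using \<delta>0 by (simp add: algebra_simps)
      moreover have "\<bar>u g / \<delta> - real_of_int (round (u g / \<delta>))\<bar> \<le> 1/2"
        using of_int_round_le[of "u g / \<delta>"] of_int_round_ge[of "u g / \<delta>"] by linarith
      ultimately have "\<bar>u g - \<delta> * real_of_int (round (u g / \<delta>))\<bar> \<le> \<delta> / 2"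
        using \<delta>0 by (simp add: abs_mult)
      then have "\<bar>u g - \<delta> * real_of_int (round (u g / \<delta>))\<bar> * norm g \<le> (\<delta> / 2) * norm g"
        by (rule mult_right_mono) simp
      then show "norm ((u g - \<delta> * real_of_int (round (u g / \<delta>))) *\<^sub>R g) \<le> (\<delta> / 2) * norm g"
        by simp
    qed
    also have "\<dots> = (\<delta> / 2) * \<sigma>" unfolding \<sigma>_def by (simp add: sum_distrib_left)
    also have "\<dots> \<le> r"
    proof -
      have "\<delta> * \<sigma> \<le> \<delta> * (\<sigma> + 1)" using \<delta>0 by simp
      also have "\<dots> = r" unfolding \<delta>_def using \<sigma>0 by simp
      finally show ?thesis using \<delta>0 \<sigma>0 r by simp
    qed
    finally show ?thesis using nN by blast
  qed
  then show ?thesis using fN by blast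
qed




lemma exists_unit:
  fixes Z :: "'h::real_normed_vector \<Rightarrow>\<^sub>L 'h"
  assumes "c < norm Z" "0 \<le> c"
  shows "\<exists>x. norm x \<le> 1 \<and> c < norm (blinfun_apply Z x)"
proof (rule ccontr)
  assume "\<not> ?thesis"
  then have h: "norm (blinfun_apply Z x) \<le> c" if "norm x \<le> 1" for x using that by (meson not_le)
  have "norm Z \<le> c"
  proof (rule norm_blinfun_bound[OF assms(2)])
    fix x
    show "norm (blinfun_apply Z x) \<le> c * norm x"
    proof (cases "x = 0")
      case True then show ?thesis by simp
    next
      case False
      then have nx: "norm x > 0" by simp
      have "norm (blinfun_apply Z ((1 / norm x) *\<^sub>R x)) \<le> c" by (rule h) (use nx in simp)
      then have "(1 / norm x) * norm (blinfun_apply Z x) \<le> c" by (simp add: blinfun.scaleR_right)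
      then show ?thesis using nx by (simp add: field_simps)
    qed
  qed
  then show False using assms(1) by simp
qed

lemma infdist_lt:
  assumes "V \<noteq> {}" "infdist x V < t"
  shows "\<exists>v\<in>V. dist x v < t"
proof -
  have "(INF a\<in>V. dist x a) < t" using assms by (simp add: infdist_notempty)
  moreover have "bdd_below ((\<lambda>a. dist x a) ` V)" by (rule bdd_belowI[of _ 0]) auto
  ultimately show ?thesis using cINF_less_iff[OF assms(1)] by blast
qed

lemma pw_bound:
  fixes A X :: "'h::{real_inner,complete_space} \<Rightarrow>\<^sub>L 'h"
  assumes B: "rstar B" and AB: "A \<in> B" and G: "finite G" and VG: "V \<subseteq> span G" and V0: "0 \<in> V"
    and hyp: "\<And>Y. Y \<in> B \<Longrightarrow> norm Y \<le> 1 \<Longrightarrow> infdist (A o\<^sub>L Y o\<^sub>L A) V \<le> s"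
    and X: "X \<in> wcl B" and nX: "norm X \<le> 1"
  shows "infdist (A o\<^sub>L X o\<^sub>L A) V \<le> s"
proof (rule ccontr)
  define MX where "MX = A o\<^sub>L X o\<^sub>L A"
  assume "\<not> infdist (A o\<^sub>L X o\<^sub>L A) V \<le> s"
  then have gt: "infdist MX V > s" unfolding MX_def by simp
  have B0: "0 \<in> B" using B unfolding rstar_def by blast
  have s0: "s \<ge> 0" using hyp[OF B0] infdist_nonneg[of _ V] by (smt (verit) norm_zero)
  define \<epsilon> where "\<epsilon> = (infdist MX V - s) / 5"
  have \<epsilon>: "\<epsilon> > 0" unfolding \<epsilon>_def using gt by simp
  define R0 where "R0 = (norm A)^2 + s + \<epsilon>"
  obtain N where fN: "finite N" and N: "\<And>v. v \<in> span G \<Longrightarrow> norm v \<le> R0 \<Longrightarrow> \<exists>n\<in>N. norm (v - n) \<le> \<epsilon>"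
    using tb[OF G \<epsilon>, of R0] by blast
  define N' where "N' = {n \<in> N. \<exists>v\<in>V. norm (v - n) \<le> \<epsilon>}"
  have fN': "finite N'" unfolding N'_def using fN by simp
  have "\<exists>x. norm x \<le> 1 \<and> s + 3 * \<epsilon> < norm (blinfun_apply (MX - n) x)" if n: "n \<in> N'" for n
  proof -
    obtain v where v: "v \<in> V" "norm (v - n) \<le> \<epsilon>" using n unfolding N'_def by blast
    have "infdist MX V \<le> dist MX v" by (rule infdist_le[OF v(1)])
    also have "\<dots> = norm (MX - v)" by (simp add: dist_norm)
    also have "MX - v = (MX - n) - (v - n)" by simp
    also have "norm ((MX - n) - (v - n)) \<le> norm (MX - n) + norm (v - n)" by (rule norm_triangle_ineq4)
    finally have "infdist MX V \<le> norm (MX - n) + norm (v - n)" .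
    moreover have "infdist MX V = s + 5 * \<epsilon>" unfolding \<epsilon>_def by (simp add: field_simps)
    ultimately have "s + 3 * \<epsilon> < norm (MX - n)" using v(2) \<epsilon> by linarith
    then show ?thesis using exists_unit[of "s + 3 * \<epsilon>" "MX - n"] s0 \<epsilon> by simp
  qed
  then have "\<forall>n\<in>N'. \<exists>x. norm x \<le> 1 \<and> s + 3 * \<epsilon> < norm (blinfun_apply (MX - n) x)" by blast
  then obtain xf where xf0: "\<forall>n\<in>N'. norm (xf n) \<le> 1 \<and> s + 3 * \<epsilon> < norm (blinfun_apply (MX - n) (xf n))"
    by (rule bchoice[elim_format]) blast
  then have xf: "\<And>n. n \<in> N' \<Longrightarrow> norm (xf n) \<le> 1 \<and> s + 3 * \<epsilon> < norm (blinfun_apply (MX - n) (xf n))"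
    by blast
  define e' where "e' = \<epsilon> / (norm A + 1)"
  have e': "e' > 0" unfolding e'_def using \<epsilon> by (simp add: add_nonneg_pos)
  obtain Y where YB: "Y \<in> B" and nY: "norm Y \<le> 1"
    and Yap: "\<forall>z\<in>(\<lambda>n. blinfun_apply A (xf n)) ` N'. norm (blinfun_apply (X - Y) z) < e'"
    using kaplansky[OF B X nX _ e', of "(\<lambda>n. blinfun_apply A (xf n)) ` N'"] fN' by blast
  define MY where "MY = A o\<^sub>L Y o\<^sub>L A"
  have "infdist MY V < s + \<epsilon>" using hyp[OF YB nY] \<epsilon> unfolding MY_def by simp
  then obtain v where vV: "v \<in> V" and dv: "dist MY v < s + \<epsilon>" using infdist_lt V0 by blast
  have nMY: "norm MY \<le> (norm A)^2"
  proof -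
    have "norm MY \<le> norm (A o\<^sub>L Y) * norm A" unfolding MY_def by (rule norm_blinfun_compose)
    also have "\<dots> \<le> (norm A * norm Y) * norm A" by (intro mult_right_mono norm_blinfun_compose) simp
    also have "\<dots> \<le> (norm A * 1) * norm A" using nY by (intro mult_right_mono mult_left_mono) auto
    finally show ?thesis by (simp add: power2_eq_square)
  qed
  have "norm v \<le> R0"
  proof -
    have "v = MY - (MY - v)" by simp
    then have "norm v \<le> norm MY + norm (MY - v)" by (metis norm_triangle_ineq4)
    then have "norm v \<le> norm MY + dist MY v" by (simp add: dist_norm)
    then show ?thesis unfolding R0_def using nMY dv by linarith
  qed
  then obtain n where nN: "n \<in> N" and vn: "norm (v - n) \<le> \<epsilon>" using N VG vV by blast
  have nN': "n \<in> N'" unfolding N'_def using nN vn vV by blast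
  define x where "x = xf n"
  have nx: "norm x \<le> 1" and big: "s + 3 * \<epsilon> < norm (blinfun_apply (MX - n) x)" using xf[OF nN'] unfolding x_def by auto
  have eq: "blinfun_apply (MX - n) x = blinfun_apply A (blinfun_apply (X - Y) (blinfun_apply A x))
      + (blinfun_apply (MY - v) x + blinfun_apply (v - n) x)"
    unfolding MX_def MY_def by (simp add: ops blinfun.diff_left)
  have t1: "norm (blinfun_apply A (blinfun_apply (X - Y) (blinfun_apply A x))) \<le> \<epsilon>"
  proof -
    have "blinfun_apply A x \<in> (\<lambda>n. blinfun_apply A (xf n)) ` N'" unfolding x_def using nN' by blast
    then have lt: "norm (blinfun_apply (X - Y) (blinfun_apply A x)) < e'" using Yap by blast
    have "norm (blinfun_apply A (blinfun_apply (X - Y) (blinfun_apply A x))) \<le> norm A * norm (blinfun_apply (X - Y) (blinfun_apply A x))"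
      by (rule norm_blinfun)
    also have "\<dots> \<le> (norm A + 1) * e'" using lt by (intro mult_mono) auto
    also have "\<dots> = \<epsilon>"
    proof -
      have "norm A + 1 > 0" by (simp add: add_nonneg_pos)
      then show ?thesis unfolding e'_def by simp
    qed
    finally show ?thesis .
  qed
  have t2: "norm (blinfun_apply (MY - v) x) < s + \<epsilon>"
  proof -
    have "norm (blinfun_apply (MY - v) x) \<le> norm (MY - v) * norm x" by (rule norm_blinfun)
    also have "\<dots> \<le> norm (MY - v) * 1" using nx by (intro mult_left_mono) auto
    finally show ?thesis using dv by (simp add: dist_norm)
  qed
  have t3: "norm (blinfun_apply (v - n) x) \<le> \<epsilon>"
  proof -
    have "norm (blinfun_apply (v - n) x) \<le> norm (v - n) * norm x" by (rule norm_blinfun)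
    also have "\<dots> \<le> \<epsilon> * 1" using nx vn \<epsilon> by (intro mult_mono) auto
    finally show ?thesis by simp
  qed
  have "norm (blinfun_apply (MX - n) x) \<le> norm (blinfun_apply A (blinfun_apply (X - Y) (blinfun_apply A x)))
      + (norm (blinfun_apply (MY - v) x) + norm (blinfun_apply (v - n) x))"
    unfolding eq by (rule order_trans[OF norm_triangle_ineq add_left_mono[OF norm_triangle_ineq]])
  then have "norm (blinfun_apply (MX - n) x) < s + 3 * \<epsilon>" using t1 t2 t3 by linarith
  then show False using big by simp
qed




lemma nM:
  fixes A X :: "'h::real_normed_vector \<Rightarrow>\<^sub>L 'h"
  assumes "norm X \<le> 1"
  shows "norm (A o\<^sub>L X o\<^sub>L A) \<le> (norm A)^2"
proof -
  have "norm (A o\<^sub>L X o\<^sub>L A) \<le> norm (A o\<^sub>L X) * norm A" by (rule norm_blinfun_compose)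
  also have "\<dots> \<le> (norm A * norm X) * norm A" by (intro mult_right_mono norm_blinfun_compose) simp
  also have "\<dots> \<le> (norm A * 1) * norm A" using assms by (intro mult_right_mono mult_left_mono) auto
  finally show ?thesis by (simp add: power2_eq_square)
qed

lemma cspan_sub:
  fixes J :: "'h::{real_inner,complete_space} \<Rightarrow>\<^sub>L 'h"
  shows "cspan J S \<subseteq> span (S \<union> (\<lambda>s. J o\<^sub>L s) ` S)"
proof
  fix v assume "v \<in> cspan J S"
  then obtain c where v: "v = (\<Sum>s\<in>S. cscale J (c s) s)" unfolding cspan_def by blast
  have "cscale J (c s) s \<in> span (S \<union> (\<lambda>s. J o\<^sub>L s) ` S)" if "s \<in> S" for s
    unfolding cscale_def using that by (intro span_add span_scale span_base) auto
  then show "v \<in> span (S \<union> (\<lambda>s. J o\<^sub>L s) ` S)" unfolding v by (intro span_sum) auto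
qed

lemma zero_cspan: "0 \<in> cspan J S"
proof -
  have "(\<Sum>s\<in>S. cscale J ((\<lambda>_. 0) s) s) = 0" unfolding cscale_def by simp
  then show ?thesis unfolding cspan_def by force
qed

theorem lemma3p6:
  fixes J :: "'h::{real_inner,complete_space} \<Rightarrow>\<^sub>L 'h"
    and B :: "('h \<Rightarrow>\<^sub>L 'h) set"
    and A :: "'h \<Rightarrow>\<^sub>L 'h"
    and n :: nat
  assumes "complex_structure J"
    and "cstar_algebra J B"
    and "A \<in> B"
    and "n \<ge> 1"
  shows "kolmogorov J (wot_closure J B) (wot_closure J B) (\<lambda>X. A o\<^sub>L X o\<^sub>L A) n
           \<le> kolmogorov J B B (\<lambda>X. A o\<^sub>L X o\<^sub>L A) n"
proof -
  note cs = assms(2) and AB = assms(3) and n1 = assms(4)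
  have rs: "rstar B" by (rule cstar_rstar[OF cs])
  have B0: "0 \<in> B" using rs unfolding rstar_def by blast
  have Bsub: "B \<subseteq> wot_closure J B"
  proof
    fix T assume T: "T \<in> B"
    have "T \<in> cops J" using cs T unfolding cstar_algebra_def by blast
    then show "T \<in> wot_closure J B" unfolding wot_closure_def using T by (auto intro!: bexI[of _ T])
  qed
  define M where "M = (\<lambda>X. A o\<^sub>L X o\<^sub>L A)"
  define f where "f D V = Sup ((\<lambda>x. infdist (M x) V) ` {x \<in> D. norm x \<le> 1})" for D V
  have bdd: "bdd_above ((\<lambda>x. infdist (M x) V) ` {x \<in> D. norm x \<le> 1})" if "0 \<in> V" for D V
  proof (rule bdd_aboveI[of _ "(norm A)^2"])
    fix y assume "y \<in> (\<lambda>x. infdist (M x) V) ` {x \<in> D. norm x \<le> 1}"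
    then obtain x where x: "norm x \<le> 1" "y = infdist (M x) V" by blast
    have "y \<le> dist (M x) 0" unfolding x(2) by (rule infdist_le[OF that])
    also have "\<dots> \<le> (norm A)^2" unfolding M_def using nM[OF x(1)] by simp
    finally show "y \<le> (norm A)^2" .
  qed
  have fnn: "f D V \<ge> 0" if "0 \<in> V" "0 \<in> D" for D V
  proof -
    have "infdist (M 0) V \<le> f D V" unfolding f_def using that bdd[OF that(1)]
      by (intro cSUP_upper) auto
    then show ?thesis using infdist_nonneg[of "M 0" V] by linarith
  qed
  have key: "f (wot_closure J B) (cspan J S) \<le> f B (cspan J S)" if S: "finite S" "S \<subseteq> B" for S
  proof -
    define V where "V = cspan J S"
    have V0: "0 \<in> V" unfolding V_def by (rule zero_cspan)
    have hyp: "infdist (A o\<^sub>L Y o\<^sub>L A) V \<le> f B V" if "Y \<in> B" "norm Y \<le> 1" for Y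
    proof -
      have "infdist (M Y) V \<le> f B V" unfolding f_def using that bdd[OF V0, of B]
        by (intro cSUP_upper) auto
      then show ?thesis unfolding M_def .
    qed
    have "f (wot_closure J B) V \<le> f B V"
      unfolding f_def[of "wot_closure J B"]
    proof (rule cSUP_least)
      show "{x \<in> wot_closure J B. norm x \<le> 1} \<noteq> {}" using B0 Bsub by auto
      fix X assume X: "X \<in> {x \<in> wot_closure J B. norm x \<le> 1}"
      have "infdist (A o\<^sub>L X o\<^sub>L A) V \<le> f B V"
      proof (rule pw_bound[OF rs AB _ _ V0 hyp])
        show "finite (S \<union> (\<lambda>s. J o\<^sub>L s) ` S)" using S by simp
        show "V \<subseteq> span (S \<union> (\<lambda>s. J o\<^sub>L s) ` S)" unfolding V_def by (rule cspan_sub)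
        show "X \<in> wcl B" using X wot_sub_wcl by blast
        show "norm X \<le> 1" using X by blast
      qed auto
      then show "infdist (M X) V \<le> f B V" unfolding M_def .
    qed
    then show ?thesis unfolding V_def .
  qed
  define LS where "LS = {f (wot_closure J B) V | V. \<exists>S. finite S \<and> card S < n \<and> S \<subseteq> wot_closure J B \<and> V = cspan J S}"
  define RS where "RS = {f B V | V. \<exists>S. finite S \<and> card S < n \<and> S \<subseteq> B \<and> V = cspan J S}"
  have kL: "kolmogorov J (wot_closure J B) (wot_closure J B) (\<lambda>X. A o\<^sub>L X o\<^sub>L A) n = Inf LS"
    unfolding kolmogorov_def LS_def f_def M_def by simp
  have kR: "kolmogorov J B B (\<lambda>X. A o\<^sub>L X o\<^sub>L A) n = Inf RS"
    unfolding kolmogorov_def RS_def f_def M_def by simp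
  have RSne: "RS \<noteq> {}" unfolding RS_def using n1 by (auto intro!: exI[of _ "{}"])
  have LSbdd: "bdd_below LS"
  proof (rule bdd_belowI[of _ 0])
    fix y assume "y \<in> LS"
    then obtain S where "y = f (wot_closure J B) (cspan J S)" unfolding LS_def by blast
    then show "0 \<le> y" using fnn[OF zero_cspan] B0 Bsub by blast
  qed
  have "Inf LS \<le> Inf RS"
  proof (rule cInf_greatest[OF RSne])
    fix y assume "y \<in> RS"
    then obtain S where S: "finite S" "card S < n" "S \<subseteq> B" and y: "y = f B (cspan J S)"
      unfolding RS_def by blast
    have "f (wot_closure J B) (cspan J S) \<in> LS" unfolding LS_def using S Bsub by blast
    then have "Inf LS \<le> f (wot_closure J B) (cspan J S)" by (rule cInf_lower[OF _ LSbdd])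
    also have "\<dots> \<le> y" unfolding y by (rule key[OF S(1) S(3)])
    finally show "Inf LS \<le> y" .
  qed
  then show ?thesis unfolding kL kR .
qed



end
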